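(* Let $R$ be a skew field and let $n \geqslant 3$ be an integer. Let $P$ be an $n$-gon whose vertex set is numbered by $\{1,\ldots,n\}$ so that $1<2<\cdots<n<1$ or $1>2>\cdots>n>1$ in the cyclic order of the vertices. Let $c : \operatorname{diag} P \to R^*$ be a frieze, and let $M_c$ be the $n \times n$ matrix whose $(i,k)$ entry is $c_{ik}$ for $i \neq k$ and $0$ for $i=k$. Then the Dieudonné determinant of $M_c$ is \[ \det M_c = \overline{-(-2)^{n-2}} \cdot \overline{c_{12}c_{23}\cdots c_{n-1,n}c_{n1}}. \]
   Context: A polygon $P$ is a finite set $V$ of at least three vertices with a cyclic ordering; $\operatorname{diag} P$ is the set of ordered pairs $(i,k)$ of distinct vertices (called diagonals), and we write $c_{ik}$ for $c(i,k)$. Diagonals $(i,k)$ and $(j,\ell)$ cross if $i,j,k,\ell$ are pairwise distinct and $i<j<k<\ell$ or $i<\ell<k<j$ in the cyclic order. For a ring $R$ with group of units $R^*$, a map $c:\operatorname{diag}P\to R^*$ is a frieze if (i) for all pairwise distinct vertices $i,j,k$ the triangle relation $c_{ij}c_{kj}^{-1}c_{ki}=c_{ik}c_{jk}^{-1}c_{ji}$ holds, and (ii) whenever $(i,k)$ and $(j,\ell)$ cross, the exchange relation $c_{ik}=c_{ij}c_{\ell j}^{-1}c_{\ell k}+c_{i\ell}c_{j\ell}^{-1}c_{jk}$ holds. For a skew field $R$, the Dieudonné determinant takes values in $(R^*/[R^*,R^*])\,\dot\cup\,\{0\}$; for $x \in R^*$, $\overline{x}$ denotes the coset of $x$ in the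 abelianisation $R^*/[R^*,R^*]$, and $\overline{0}=0$. *)

theory Defs
  imports Main
begin

text \<open>The vertices of the n-gon are numbered 1..n, with cyclic order
  1 < 2 < ... < n < 1 (reversed = False) or 1 > 2 > ... > n > 1 (reversed = True).
  cyc4 lt a b d e means a < b < d < e in the cyclic order induced by the
  linear order lt on the labels.\<close>

definition cyc4 :: "(nat \<Rightarrow> nat \<Rightarrow> bool) \<Rightarrow> nat \<Rightarrow> nat \<Rightarrow> nat \<Rightarrow> nat \<Rightarrow> bool" where
  "cyc4 lt a b d e \<longleftrightarrow>
     (lt a b \<and> lt b d \<and> lt d e) \<or> (lt b d \<and> lt d e \<and> lt e a) \<or>
     (lt d e \<and> lt e a \<and> lt a b) \<or> (lt e a \<and> lt a b \<and> lt b d)"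

definition vord :: "bool \<Rightarrow> nat \<Rightarrow> nat \<Rightarrow> bool" where
  "vord reversed a b = (if reversed then b < a else a < b)"

definition crosses :: "bool \<Rightarrow> nat \<Rightarrow> nat \<Rightarrow> nat \<Rightarrow> nat \<Rightarrow> bool" where
  "crosses reversed i k j l \<longleftrightarrow>
     distinct [i, j, k, l] \<and> (cyc4 (vord reversed) i j k l \<or> cyc4 (vord reversed) i l k j)"

definition is_frieze :: "nat \<Rightarrow> bool \<Rightarrow> (nat \<Rightarrow> nat \<Rightarrow> 'a::division_ring) \<Rightarrow> bool" where
  "is_frieze n reversed c \<longleftrightarrow>
     (\<forall>i\<in>{1..n}. \<forall>k\<in>{1..n}. i \<noteq> k \<longrightarrow> c i k \<noteq> 0) \<and>
     (\<forall>i\<in>{1..n}. \<forall>j\<in>{1..n}. \<forall>k\<in>{1..n}. distinct [i, j, k] \<longrightarrow>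
        c i j * inverse (c k j) * c k i = c i k * inverse (c j k) * c j i) \<and>
     (\<forall>i\<in>{1..n}. \<forall>j\<in>{1..n}. \<forall>k\<in>{1..n}. \<forall>l\<in>{1..n}. crosses reversed i k j l \<longrightarrow>
        c i k = c i j * inverse (c l j) * c l k + c i l * inverse (c j l) * c j k)"

inductive_set comm_subgrp :: "'a::division_ring set" where
  one: "1 \<in> comm_subgrp"
| comm: "a \<noteq> 0 \<Longrightarrow> b \<noteq> 0 \<Longrightarrow> a * b * inverse a * inverse b \<in> comm_subgrp"
| mult: "x \<in> comm_subgrp \<Longrightarrow> y \<in> comm_subgrp \<Longrightarrow> x * y \<in> comm_subgrp"
| inv: "x \<in> comm_subgrp \<Longrightarrow> inverse x \<in> comm_subgrp"

text \<open>The class of x: the coset x[R*,R*] in R*/[R*,R*] for x \<noteq> 0, and the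
  extra element 0 (represented by {0}) for x = 0.\<close>
definition cls :: "'a::division_ring \<Rightarrow> 'a set" where
  "cls x = (if x = 0 then {0} else {x * h | h. h \<in> comm_subgrp})"

definition cls_mult :: "'a::division_ring set \<Rightarrow> 'a set \<Rightarrow> 'a set" where
  "cls_mult A B = {a * b | a b. a \<in> A \<and> b \<in> B}"

definition mat_mult :: "nat \<Rightarrow> (nat \<Rightarrow> nat \<Rightarrow> 'a::ring_1) \<Rightarrow> (nat \<Rightarrow> nat \<Rightarrow> 'a) \<Rightarrow> nat \<Rightarrow> nat \<Rightarrow> 'a" where
  "mat_mult n A B i k = (\<Sum>j\<in>{1..n}. A i j * B j k)"

definition mat_id :: "nat \<Rightarrow> nat \<Rightarrow> 'a::ring_1" where
  "mat_id i k = (if i = k then 1 else 0)"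

definition mat_eq :: "nat \<Rightarrow> (nat \<Rightarrow> nat \<Rightarrow> 'a) \<Rightarrow> (nat \<Rightarrow> nat \<Rightarrow> 'a) \<Rightarrow> bool" where
  "mat_eq n A B \<longleftrightarrow> (\<forall>i\<in>{1..n}. \<forall>k\<in>{1..n}. A i k = B i k)"

definition mat_invertible :: "nat \<Rightarrow> (nat \<Rightarrow> nat \<Rightarrow> 'a::ring_1) \<Rightarrow> bool" where
  "mat_invertible n A \<longleftrightarrow> (\<exists>B. mat_eq n (mat_mult n A B) mat_id \<and> mat_eq n (mat_mult n B A) mat_id)"

definition elem_mat :: "nat \<Rightarrow> nat \<Rightarrow> 'a::ring_1 \<Rightarrow> nat \<Rightarrow> nat \<Rightarrow> 'a" where
  "elem_mat p q a i k = mat_id i k + (if i = p \<and> k = q then a else 0)"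

inductive_set elem_prods :: "nat \<Rightarrow> (nat \<Rightarrow> nat \<Rightarrow> 'a::ring_1) set" for n where
  id: "mat_id \<in> elem_prods n"
| step: "E \<in> elem_prods n \<Longrightarrow> p \<in> {1..n} \<Longrightarrow> q \<in> {1..n} \<Longrightarrow> p \<noteq> q \<Longrightarrow>
         mat_mult n E (elem_mat p q a) \<in> elem_prods n"

definition diag_last :: "nat \<Rightarrow> 'a::ring_1 \<Rightarrow> nat \<Rightarrow> nat \<Rightarrow> 'a" where
  "diag_last n x i k = (if i = k then (if i = n then x else 1) else 0)"

text \<open>Dieudonne determinant: every invertible A can be written as E diag(1,..,1,x)
  with E in E_n(R), and det A is the class of x in R*/[R*,R*] (well defined by
  Dieudonne's theorem); det A = 0 for singular A.\<close>
definition dieudonne_det :: "nat \<Rightarrow> (nat \<Rightarrow> nat \<Rightarrow> 'a::division_ring) \<Rightarrow> 'a set" where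
  "dieudonne_det n A =
     (if mat_invertible n A
      then cls (SOME x. x \<noteq> 0 \<and> (\<exists>E\<in>elem_prods n. mat_eq n A (mat_mult n E (diag_last n x))))
      else {0})"

definition frieze_mat :: "(nat \<Rightarrow> nat \<Rightarrow> 'a::zero) \<Rightarrow> nat \<Rightarrow> nat \<Rightarrow> 'a" where
  "frieze_mat c i k = (if i = k then 0 else c i k)"

end

theory Submission
  imports Defs "HOL-Library.Multiset"
begin


lemma H_nz: "x \<in> comm_subgrp \<Longrightarrow> (x::'a::division_ring) \<noteq> 0"
  by (induction rule: comm_subgrp.induct) auto

lemma H_conj:
  assumes "h \<in> comm_subgrp" "(x::'a::division_ring) \<noteq> 0"
  shows "x * h * inverse x \<in> comm_subgrp"
proof -
  have hn: "h \<noteq> 0" using H_nz assms by blast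
  have "x * h * inverse x * inverse h \<in> comm_subgrp" by (rule comm_subgrp.comm[OF assms(2) hn])
  then have "(x * h * inverse x * inverse h) * h \<in> comm_subgrp" using assms(1) comm_subgrp.mult by blast
  moreover have "(x * h * inverse x * inverse h) * h = x * h * inverse x"
    using hn by (simp add: mult.assoc)
  ultimately show ?thesis by simp
qed

lemma inv_cancel1[simp]: "(z::'a::division_ring) \<noteq> 0 \<Longrightarrow> z * (inverse z * w) = w"
  by (simp add: mult.assoc[symmetric])
lemma inv_cancel2[simp]: "(z::'a::division_ring) \<noteq> 0 \<Longrightarrow> inverse z * (z * w) = w"
  by (simp add: mult.assoc[symmetric])

definition ceq :: "'a::division_ring \<Rightarrow> 'a \<Rightarrow> bool" where
  "ceq x y \<longleftrightarrow> (x = 0 \<and> y = 0) \<or> (x \<noteq> 0 \<and> y \<noteq> 0 \<and> x * inverse y \<in> comm_subgrp)"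

lemma ceq_refl[simp]: "ceq x x"
  by (auto simp: ceq_def intro: comm_subgrp.one)

lemma ceq_sym: "ceq x y \<Longrightarrow> ceq y x"
  unfolding ceq_def
proof (elim disjE conjE)
  assume "x \<noteq> 0" "y \<noteq> 0" "x * inverse y \<in> comm_subgrp"
  then have "inverse (x * inverse y) \<in> comm_subgrp" using comm_subgrp.inv by blast
  moreover have "inverse (x * inverse y) = y * inverse x"
    using \<open>x \<noteq> 0\<close> \<open>y \<noteq> 0\<close> by (simp add: nonzero_inverse_mult_distrib)
  ultimately show "y = 0 \<and> x = 0 \<or> y \<noteq> 0 \<and> x \<noteq> 0 \<and> y * inverse x \<in> comm_subgrp"
    using \<open>x \<noteq> 0\<close> \<open>y \<noteq> 0\<close> by simp
qed auto

lemma ceq_trans: "ceq x y \<Longrightarrow> ceq y z \<Longrightarrow> ceq x z"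
  unfolding ceq_def
proof (elim disjE conjE)
  assume a: "x \<noteq> 0" "y \<noteq> 0" "x * inverse y \<in> comm_subgrp" "z \<noteq> 0" "y * inverse z \<in> comm_subgrp"
  then have "(x * inverse y) * (y * inverse z) \<in> comm_subgrp" using comm_subgrp.mult by blast
  moreover have "(x * inverse y) * (y * inverse z) = x * inverse z"
    using a by (simp add: mult.assoc)
  ultimately show "x = 0 \<and> z = 0 \<or> x \<noteq> 0 \<and> z \<noteq> 0 \<and> x * inverse z \<in> comm_subgrp"
    using a by simp
qed auto

lemma ceq_mult_right: "ceq x y \<Longrightarrow> ceq (x * z) (y * z)"
proof (cases "z = 0")
  case False
  assume h: "ceq x y"
  show ?thesis using h unfolding ceq_def
  proof (elim disjE conjE)
    assume a: "x \<noteq> 0" "y \<noteq> 0" "x * inverse y \<in> comm_subgrp"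
    have "x * z * inverse (y * z) = x * inverse y"
      using a False by (simp add: nonzero_inverse_mult_distrib mult.assoc)
    then show "x * z = 0 \<and> y * z = 0 \<or> x * z \<noteq> 0 \<and> y * z \<noteq> 0 \<and> x * z * inverse (y * z) \<in> comm_subgrp"
      using a False by simp
  qed simp
qed simp

lemma ceq_mult_left: "ceq x y \<Longrightarrow> ceq (z * x) (z * y)"
proof (cases "z = 0")
  case False
  assume h: "ceq x y"
  show ?thesis using h unfolding ceq_def
  proof (elim disjE conjE)
    assume a: "x \<noteq> 0" "y \<noteq> 0" "x * inverse y \<in> comm_subgrp"
    have "z * x * inverse (z * y) = z * (x * inverse y) * inverse z"
      using a False by (simp add: nonzero_inverse_mult_distrib mult.assoc)
    moreover have "z * (x * inverse y) * inverse z \<in> comm_subgrp" using H_conj a False by blast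
    ultimately show "z * x = 0 \<and> z * y = 0 \<or> z * x \<noteq> 0 \<and> z * y \<noteq> 0 \<and> z * x * inverse (z * y) \<in> comm_subgrp"
      using a False by simp
  qed simp
qed simp

lemma ceq_mult: "ceq a b \<Longrightarrow> ceq c d \<Longrightarrow> ceq (a * c) (b * d)"
  by (meson ceq_mult_left ceq_mult_right ceq_trans)

lemma ceq_comm: "ceq ((x::'a::division_ring) * y) (y * x)"
proof (cases "x = 0 \<or> y = 0")
  case True then show ?thesis by (auto simp: ceq_def)
next
  case False
  then have "x * y * inverse x * inverse y \<in> comm_subgrp" by (auto intro: comm_subgrp.comm)
  moreover have "x * y * inverse (y * x) = x * y * inverse x * inverse y"
    using False by (simp add: nonzero_inverse_mult_distrib mult.assoc)
  ultimately show ?thesis using False by (simp add: ceq_def)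
qed

lemma ceq_prod_list_perm:
  "mset xs = mset ys \<Longrightarrow> ceq (prod_list (xs::'a::division_ring list)) (prod_list ys)"
proof (induction xs arbitrary: ys)
  case Nil then show ?case by simp
next
  case (Cons x xs)
  then have "x \<in> set ys" by (metis list.set_intros(1) set_mset_mset)
  then obtain ys1 ys2 where ys: "ys = ys1 @ x # ys2" by (meson split_list)
  have "mset xs = mset (ys1 @ ys2)" using Cons.prems ys by simp
  then have "ceq (prod_list xs) (prod_list (ys1 @ ys2))" by (rule Cons.IH)
  then have "ceq (x * prod_list xs) (x * prod_list (ys1 @ ys2))" by (rule ceq_mult_left)
  moreover have "x * prod_list (ys1 @ ys2) = (x * prod_list ys1) * prod_list ys2" by (simp add: mult.assoc)
  moreover have "ceq ((x * prod_list ys1) * prod_list ys2) ((prod_list ys1 * x) * prod_list ys2)"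
    by (rule ceq_mult_right[OF ceq_comm])
  moreover have "(prod_list ys1 * x) * prod_list ys2 = prod_list ys" using ys by (simp add: mult.assoc)
  ultimately show ?case by (metis ceq_trans prod_list.Cons)
qed

lemma cls_ceq: "ceq x y \<Longrightarrow> cls x = cls y"
proof -
  assume h: "ceq x y"
  show ?thesis using h unfolding ceq_def
  proof (elim disjE conjE)
    assume a: "x \<noteq> 0" "y \<noteq> 0" "x * inverse y \<in> comm_subgrp"
    have 1: "inverse x * y \<in> comm_subgrp"
    proof -
      have "inverse x * (inverse (x * inverse y)) * x \<in> comm_subgrp"
        using H_conj[OF comm_subgrp.inv[OF a(3)], of "inverse x"] a by simp
      moreover have "inverse x * (inverse (x * inverse y)) * x = inverse x * y"
        using a by (simp add: nonzero_inverse_mult_distrib mult.assoc)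
      ultimately show ?thesis by simp
    qed
    have "{x * h |h. h \<in> comm_subgrp} = {y * h |h. h \<in> comm_subgrp}"
    proof (intro set_eqI iffI)
      fix z assume "z \<in> {x * h |h. h \<in> comm_subgrp}"
      then obtain h where "h \<in> comm_subgrp" "z = x * h" by blast
      moreover have "x * h = y * ((inverse y * x) * h)" using a by (simp add: mult.assoc[symmetric])
      moreover have "inverse y * x \<in> comm_subgrp"
      proof -
        have "inverse (inverse x * y) = inverse y * x" using a by (simp add: nonzero_inverse_mult_distrib)
        then show ?thesis using comm_subgrp.inv[OF 1] by simp
      qed
      ultimately show "z \<in> {y * h |h. h \<in> comm_subgrp}" by (auto intro: comm_subgrp.mult)
    next
      fix z assume "z \<in> {y * h |h. h \<in> comm_subgrp}"
      then obtain h where "h \<in> comm_subgrp" "z = y * h" by blast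
      moreover have "y * h = x * ((inverse x * y) * h)" using a by (simp add: mult.assoc[symmetric])
      ultimately show "z \<in> {x * h |h. h \<in> comm_subgrp}" using 1 by (auto intro: comm_subgrp.mult)
    qed
    then show "cls x = cls y" using a by (simp add: cls_def)
  qed simp
qed

lemma cls_mult_cls: "cls_mult (cls a) (cls b) = cls ((a::'a::division_ring) * b)"
proof (cases "a = 0 \<or> b = 0")
  case True
  have ne: "\<And>z::'a. z \<in> cls z" by (auto simp: cls_def intro!: exI[of _ 1] comm_subgrp.one)
  show ?thesis using True
    by (auto simp: cls_mult_def cls_def intro: comm_subgrp.one)
next
  case False
  show ?thesis
  proof (intro set_eqI iffI)
    fix z assume "z \<in> cls_mult (cls a) (cls b)"
    then obtain h1 h2 where h: "h1 \<in> comm_subgrp" "h2 \<in> comm_subgrp" "z = a * h1 * (b * h2)"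
      using False by (auto simp: cls_mult_def cls_def)
    have "a * h1 * (b * h2) = (a * b) * ((inverse b * h1 * b) * h2)"
      using False by (simp add: mult.assoc)
    moreover have "inverse b * h1 * inverse (inverse b) \<in> comm_subgrp" using H_conj[of h1 "inverse b"] h False by simp
    ultimately show "z \<in> cls (a * b)" using h False
      by (auto simp: cls_def intro!: comm_subgrp.mult)
  next
    fix z assume "z \<in> cls (a * b)"
    then obtain h where h: "h \<in> comm_subgrp" "z = a * b * h" using False by (auto simp: cls_def)
    have "z = (a * 1) * (b * h)" using h by (simp add: mult.assoc)
    moreover have "a * 1 \<in> cls a" using False by (auto simp: cls_def intro: comm_subgrp.one)
    moreover have "b * h \<in> cls b" using False h by (auto simp: cls_def)
    ultimately show "z \<in> cls_mult (cls a) (cls b)" unfolding cls_mult_def by blast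
  qed
qed


definition cadd :: "(nat \<Rightarrow> 'a::ring) \<Rightarrow> (nat \<Rightarrow> 'a) \<Rightarrow> 'a \<Rightarrow> nat \<Rightarrow> 'a" where
  "cadd v w s = (\<lambda>t. v t + w t * s)"

definition cscale :: "(nat \<Rightarrow> 'a::ring) \<Rightarrow> 'a \<Rightarrow> nat \<Rightarrow> 'a" where
  "cscale v s = (\<lambda>t. v t * s)"

definition rv :: "nat \<Rightarrow> (nat \<Rightarrow> 'a::division_ring) list \<Rightarrow> nat \<Rightarrow> nat \<Rightarrow> nat \<Rightarrow> 'a" where
  "rv m vs k x = cadd (vs!x) (vs!k) (- (inverse ((vs!k) m) * ((vs!x) m)))"

definition redl :: "nat \<Rightarrow> (nat \<Rightarrow> 'a::division_ring) list \<Rightarrow> nat \<Rightarrow> (nat \<Rightarrow> 'a) list" where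
  "redl m vs k = map (\<lambda>x. rv m vs k (if x = k then m else x)) [0..<m]"

fun dd :: "nat \<Rightarrow> (nat \<Rightarrow> 'a::division_ring) list \<Rightarrow> 'a" where
  "dd 0 vs = 1"
| "dd (Suc m) vs = (if \<exists>k\<le>m. (vs!k) m \<noteq> 0 then
      (let k = LEAST k. k \<le> m \<and> (vs!k) m \<noteq> 0 in (if k = m then 1 else -1) * dd m (redl m vs k) * (vs!k) m)
     else 0)"

declare dd.simps(2)[simp del]

definition dpiv :: "nat \<Rightarrow> (nat \<Rightarrow> 'a::division_ring) list \<Rightarrow> nat \<Rightarrow> 'a" where
  "dpiv m vs k = (if k = m then 1 else -1) * dd m (redl m vs k) * (vs!k) m"

lemma length_redl[simp]: "length (redl m vs k) = m"
  by (simp add: redl_def)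

lemma nth_redl: "x < m \<Longrightarrow> redl m vs k ! x = rv m vs k (if x = k then m else x)"
  by (simp add: redl_def)

lemma rv_self: "(vs!k) m \<noteq> 0 \<Longrightarrow> rv m vs k k = (\<lambda>t. 0)"
  by (auto simp: rv_def cadd_def fun_eq_iff)

lemma dd_Suc_nopiv: "\<not> (\<exists>k\<le>m. (vs!k) m \<noteq> 0) \<Longrightarrow> dd (Suc m) vs = 0"
  by (auto simp add: dd.simps(2))

lemma dd_Suc_least:
  assumes "\<exists>k\<le>m. (vs!k) m \<noteq> 0"
  shows "dd (Suc m) vs = dpiv m vs (LEAST k. k \<le> m \<and> (vs!k) m \<noteq> 0)"
    and "(LEAST k. k \<le> m \<and> (vs!k) m \<noteq> 0) \<le> m"
proof -
  show "dd (Suc m) vs = dpiv m vs (LEAST k. k \<le> m \<and> (vs!k) m \<noteq> 0)"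
    using assms by (simp add: dd.simps(2) dpiv_def Let_def)
  from assms obtain k where "k \<le> m \<and> (vs!k) m \<noteq> 0" by blast
  then show "(LEAST k. k \<le> m \<and> (vs!k) m \<noteq> 0) \<le> m" by (metis (mono_tags, lifting) LeastI)
qed

lemma dd_Suc_least2:
  assumes "\<exists>k\<le>m. (vs!k) m \<noteq> 0"
  shows "(vs ! (LEAST k. k \<le> m \<and> (vs!k) m \<noteq> 0)) m \<noteq> 0"
proof -
  from assms obtain k where "k \<le> m \<and> (vs!k) m \<noteq> 0" by blast
  then show ?thesis by (metis (mono_tags, lifting) LeastI)
qed

lemma dd_cong: "(\<forall>x<m. \<forall>t<m. (vs!x) t = (ws!x) t) \<Longrightarrow> dd m vs = dd m ws"
proof (induction m arbitrary: vs ws)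
  case 0 then show ?case by simp
next
  case (Suc m)
  have row: "\<And>x. x \<le> m \<Longrightarrow> (vs!x) m = (ws!x) m" using Suc.prems by auto
  show ?case
  proof (cases "\<exists>k\<le>m. (vs!k) m \<noteq> 0")
    case False
    then have "\<not> (\<exists>k\<le>m. (ws!k) m \<noteq> 0)" using row by auto
    then show ?thesis using False by (simp add: dd_Suc_nopiv)
  next
    case True
    then have T2: "\<exists>k\<le>m. (ws!k) m \<noteq> 0" using row by auto
    have L: "(LEAST k. k \<le> m \<and> (vs!k) m \<noteq> 0) = (LEAST k. k \<le> m \<and> (ws!k) m \<noteq> 0)"
      by (rule arg_cong[where f = Least]) (use row in auto)
    define k where "k = (LEAST k. k \<le> m \<and> (vs!k) m \<noteq> 0)"
    have km: "k \<le> m" using dd_Suc_least(2)[OF True] k_def by simp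
    have "dd m (redl m vs k) = dd m (redl m ws k)"
    proof (rule Suc.IH, intro allI impI)
      fix x t assume "x < m" "t < m"
      then show "(redl m vs k ! x) t = (redl m ws k ! x) t"
        using Suc.prems km row by (auto simp: nth_redl rv_def cadd_def)
    qed
    then show ?thesis using True T2 L km row
      by (simp add: dd_Suc_least(1) k_def[symmetric] dpiv_def)
  qed
qed

definition P1 :: "'a::division_ring itself \<Rightarrow> nat \<Rightarrow> bool" where
  "P1 T m \<longleftrightarrow> (\<forall>(vs::(nat \<Rightarrow> 'a) list) i j s. length vs = m \<longrightarrow> i < m \<longrightarrow> j < m \<longrightarrow> i \<noteq> j \<longrightarrow>
      ceq (dd m (vs[j := cadd (vs!j) (vs!i) s])) (dd m vs))"

definition P2 :: "'a::division_ring itself \<Rightarrow> nat \<Rightarrow> bool" where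
  "P2 T m \<longleftrightarrow> (\<forall>(vs::(nat \<Rightarrow> 'a) list) j s. length vs = m \<longrightarrow> j < m \<longrightarrow> s \<noteq> 0 \<longrightarrow>
      ceq (dd m (vs[j := cscale (vs!j) s])) (dd m vs * s))"

lemma P1D: "P1 TYPE('a::division_ring) m \<Longrightarrow> length (vs::(nat \<Rightarrow> 'a) list) = m \<Longrightarrow> i < m \<Longrightarrow> j < m \<Longrightarrow> i \<noteq> j \<Longrightarrow>
      ceq (dd m (vs[j := cadd (vs!j) (vs!i) s])) (dd m vs)"
  unfolding P1_def by blast

lemma P2D: "P2 TYPE('a::division_ring) m \<Longrightarrow> length (vs::(nat \<Rightarrow> 'a) list) = m \<Longrightarrow> j < m \<Longrightarrow> s \<noteq> 0 \<Longrightarrow>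
      ceq (dd m (vs[j := cscale (vs!j) s])) (dd m vs * s)"
  unfolding P2_def by blast

lemma dd_swap:
  assumes p1: "P1 TYPE('a::division_ring) m" and p2: "P2 TYPE('a) m"
    and len: "length (vs::(nat \<Rightarrow> 'a) list) = m" and ij: "i < m" "j < m" "i \<noteq> j"
  shows "ceq (dd m (vs[i := vs!j, j := vs!i])) (- dd m vs)"
proof -
  define v1 where "v1 = vs[j := cadd (vs!j) (vs!i) 1]"
  define v2 where "v2 = v1[i := cadd (v1!i) (v1!j) (-1)]"
  define v3 where "v3 = v2[j := cadd (v2!j) (v2!i) 1]"
  define v4 where "v4 = v3[i := cscale (v3!i) (-1)]"
  have l: "length v1 = m" "length v2 = m" "length v3 = m" by (simp_all add: v1_def v2_def v3_def len)
  have c1: "ceq (dd m v1) (dd m vs)" unfolding v1_def using P1D[OF p1 len ij(1,2,3)] .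
  have c2: "ceq (dd m v2) (dd m v1)" unfolding v2_def using P1D[OF p1 l(1) ij(2,1)] ij(3) by simp
  have c3: "ceq (dd m v3) (dd m v2)" unfolding v3_def using P1D[OF p1 l(2) ij(1,2,3)] .
  have c4: "ceq (dd m v4) (dd m v3 * (-1))" unfolding v4_def using P2D[OF p2 l(3) ij(1), of "-1"] by simp
  have "v4 = vs[i := vs!j, j := vs!i]"
  proof (rule nth_equalityI)
    show "length v4 = length (vs[i := vs!j, j := vs!i])" by (simp add: v4_def l len)
  next
    fix x assume "x < length v4"
    then show "v4 ! x = vs[i := vs!j, j := vs!i] ! x"
      using ij len by (auto simp: v4_def v3_def v2_def v1_def nth_list_update cadd_def cscale_def fun_eq_iff algebra_simps)
  qed
  then have "ceq (dd m (vs[i := vs!j, j := vs!i])) (dd m vs * (-1))"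
    using c1 c2 c3 c4 by (metis ceq_trans ceq_mult_right)
  then show ?thesis by simp
qed

definition mop :: "(nat \<Rightarrow> 'a::ring) list \<Rightarrow> nat \<Rightarrow> nat set \<Rightarrow> (nat \<Rightarrow> 'a) \<Rightarrow> (nat \<Rightarrow> 'a) list" where
  "mop vs i T f = map (\<lambda>j. if j \<in> T then cadd (vs!j) (vs!i) (f j) else vs!j) [0..<length vs]"

lemma length_mop[simp]: "length (mop vs i T f) = length vs"
  by (simp add: mop_def)

lemma nth_mop: "j < length vs \<Longrightarrow> mop vs i T f ! j = (if j \<in> T then cadd (vs!j) (vs!i) (f j) else vs!j)"
  by (simp add: mop_def)

lemma dd_mop:
  assumes p1: "P1 TYPE('a::division_ring) m"
    and len: "length (vs::(nat \<Rightarrow> 'a) list) = m" and i: "i < m" and T: "T \<subseteq> {..<m}" "i \<notin> T"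
  shows "ceq (dd m (mop vs i T f)) (dd m vs)"
proof -
  have "finite T" using T finite_subset by blast
  then show ?thesis using T
  proof (induction T rule: finite_induct)
    case empty
    have "mop vs i {} f = vs" by (rule nth_equalityI) (auto simp: nth_mop)
    then show ?case by simp
  next
    case (insert a T)
    have a: "a < m" "a \<noteq> i" using insert.prems by auto
    have e: "mop vs i (insert a T) f = (mop vs i T f)[a := cadd ((mop vs i T f)!a) ((mop vs i T f)!i) (f a)]"
      by (rule nth_equalityI) (use insert.hyps insert.prems a i len in \<open>auto simp: nth_mop nth_list_update\<close>)
    have "ceq (dd m (mop vs i (insert a T) f)) (dd m (mop vs i T f))"
      unfolding e by (rule P1D[OF p1]) (use len a i in auto)
    moreover have "ceq (dd m (mop vs i T f)) (dd m vs)" using insert by auto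
    ultimately show ?case by (rule ceq_trans)
  qed
qed

lemma abel1:
  assumes "q \<noteq> 0"
  shows "ceq ((a::'a::division_ring) * (- (inverse q * p)) * q) (- (a * p))"
proof -
  have eq1: "prod_list [-1, a, inverse q, p, q] = a * (- (inverse q * p)) * q" by (simp add: mult.assoc)
  have eq2: "prod_list [-1, a, p, inverse q, q] = - (a * p)" using assms by (simp add: mult.assoc)
  have "ceq (prod_list [-1, a, inverse q, p, q]) (prod_list [-1, a, p, inverse q, q])"
    by (rule ceq_prod_list_perm) simp
  then show ?thesis unfolding eq1 eq2 .
qed


lemma key_rv:
  assumes "(vs!k) m \<noteq> 0" "(vs!k') m \<noteq> 0"
  shows "rv m vs k' x = cadd (rv m vs k x) (rv m vs k k') (- (inverse ((vs!k') m) * (vs!x) m))"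
  using assms by (simp add: rv_def cadd_def fun_eq_iff algebra_simps)

lemma piv_lt:
  fixes vs :: "(nat \<Rightarrow> 'a::division_ring) list"
  assumes p1: "P1 TYPE('a) m" and p2: "P2 TYPE('a) m" and len: "length vs = Suc m"
    and kk: "k < k'" "k' \<le> m" and pk: "(vs!k) m \<noteq> 0" and qk: "(vs!k') m \<noteq> 0"
  shows "ceq (dpiv m vs k') (dpiv m vs k)"
proof -
  define p where "p = (vs!k) m"
  define q where "q = (vs!k') m"
  define B where "B = redl m vs k"
  define B' where "B' = redl m vs k'"
  define \<mu> where "\<mu> = - (inverse q * p)"
  have key: "\<And>x. rv m vs k' x = cadd (rv m vs k x) (rv m vs k k') (- (inverse q * (vs!x) m))"
    using key_rv[OF pk qk] q_def by simp
  have z: "rv m vs k k = (\<lambda>t. 0)" using rv_self[OF pk] .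
  have mu0: "\<mu> \<noteq> 0" using pk qk by (simp add: \<mu>_def p_def q_def)
  have lB: "length B = m" by (simp add: B_def)
  have km: "k < m" using kk by simp
  have main: "ceq (dpiv m vs k') (dd m B * \<mu> * q)"
  proof (cases "k' = m")
    case True
    define T where "T = {..<m} - {k}"
    define f where "f = (\<lambda>x. - (inverse q * (vs!x) m))"
    define C where "C = mop B k T f"
    have Ck: "C!k = B!k" using km by (simp add: C_def nth_mop lB T_def)
    have eq: "B' = C[k := cscale (C!k) \<mu>]"
    proof (rule nth_equalityI)
      show "length B' = length (C[k := cscale (C!k) \<mu>])" by (simp add: B'_def C_def lB)
    next
      fix y assume y: "y < length B'"
      then have ym: "y < m" by (simp add: B'_def)
      show "B' ! y = C[k := cscale (C!k) \<mu>] ! y"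
      proof (cases "y = k")
        case True
        then show ?thesis using ym km Ck key[of k] z True \<open>k' = m\<close>
          by (simp add: B'_def B_def C_def nth_redl lB \<mu>_def p_def cadd_def cscale_def fun_eq_iff)
      next
        case False
        then show ?thesis using ym km key[of y] \<open>k' = m\<close>
          by (simp add: B'_def B_def C_def nth_redl lB nth_mop T_def f_def)
      qed
    qed
    have "ceq (dd m B') (dd m C * \<mu>)" unfolding eq
      by (rule P2D[OF p2]) (use lB km mu0 in \<open>simp_all add: C_def\<close>)
    moreover have "ceq (dd m C) (dd m B)" unfolding C_def
      by (rule dd_mop[OF p1 lB km]) (auto simp: T_def)
    ultimately have "ceq (dd m B') (dd m B * \<mu>)" by (meson ceq_mult_right ceq_trans)
    then have "ceq (dd m B' * q) (dd m B * \<mu> * q)" by (rule ceq_mult_right)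
    then show ?thesis using True by (simp add: dpiv_def B'_def q_def)
  next
    case False
    then have k'm: "k' < m" using kk by simp
    define \<sigma> where "\<sigma> = (\<lambda>y. if y = k then m else y)"
    define g where "g = (\<lambda>y. - (inverse q * (vs!(\<sigma> y)) m))"
    define C where "C = mop B k' ({..<m} - {k'}) g"
    define D where "D = C[k := C!k', k' := C!k]"
    have lC: "length C = m" by (simp add: C_def lB)
    have Bk': "B!k' = rv m vs k k'" using kk k'm by (simp add: B_def nth_redl)
    have Ck': "C!k' = B!k'" using k'm by (simp add: C_def nth_mop lB)
    have eq: "B' = D[k := cscale (D!k) \<mu>]"
    proof (rule nth_equalityI)
      show "length B' = length (D[k := cscale (D!k) \<mu>])" by (simp add: B'_def D_def lC)
    next
      fix y assume y: "y < length B'"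
      then have ym: "y < m" by (simp add: B'_def)
      show "B' ! y = D[k := cscale (D!k) \<mu>] ! y"
      proof (cases "y = k")
        case True
        then show ?thesis using ym km k'm kk Ck' Bk' key[of k] z
          by (simp add: B'_def D_def lC nth_redl \<mu>_def p_def cadd_def cscale_def fun_eq_iff)
      next
        case yk: False
        show ?thesis
        proof (cases "y = k'")
          case True
          then show ?thesis using ym km k'm kk yk key[of m]
            by (simp add: B'_def D_def lC nth_redl C_def nth_mop lB B_def g_def \<sigma>_def)
        next
          case False
          then show ?thesis using ym km k'm kk yk key[of y]
            by (simp add: B'_def D_def lC nth_redl C_def nth_mop lB B_def g_def \<sigma>_def)
        qed
      qed
    qed
    have lD: "length D = m" by (simp add: D_def lC)
    have "ceq (dd m B') (dd m D * \<mu>)" unfolding eq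
      by (rule P2D[OF p2 lD km mu0])
    moreover have "ceq (dd m D) (- dd m C)" unfolding D_def
      by (rule dd_swap[OF p1 p2 lC km k'm]) (use kk in simp)
    moreover have "ceq (dd m C) (dd m B)" unfolding C_def
      by (rule dd_mop[OF p1 lB k'm]) auto
    ultimately have "ceq (dd m B') (- dd m B * \<mu>)"
      by (metis ceq_mult_right ceq_trans minus_mult_left ceq_mult_left mult_minus1)
    then have "ceq (-1 * dd m B' * q) (-1 * (- dd m B * \<mu>) * q)"
      by (meson ceq_mult_left ceq_mult_right)
    then show ?thesis using False kk by (simp add: dpiv_def B'_def q_def)
  qed
  moreover have "ceq (dd m B * \<mu> * q) (- (dd m B * p))"
    unfolding \<mu>_def by (rule abel1) (use qk q_def in simp)
  moreover have "dpiv m vs k = - (dd m B * p)" using kk by (simp add: dpiv_def B_def p_def)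
  ultimately show ?thesis by (metis ceq_trans)
qed

lemma piv_indep:
  fixes vs :: "(nat \<Rightarrow> 'a::division_ring) list"
  assumes p1: "P1 TYPE('a) m" and p2: "P2 TYPE('a) m" and len: "length vs = Suc m"
    and "k \<le> m" "k' \<le> m" "(vs!k) m \<noteq> 0" "(vs!k') m \<noteq> 0"
  shows "ceq (dpiv m vs k) (dpiv m vs k')"
proof (cases k k' rule: linorder_cases)
  case less then show ?thesis using piv_lt[OF p1 p2 len less] assms ceq_sym by blast
next
  case equal then show ?thesis by simp
next
  case greater then show ?thesis using piv_lt[OF p1 p2 len greater] assms by blast
qed

lemma dd_any_piv:
  fixes vs :: "(nat \<Rightarrow> 'a::division_ring) list"
  assumes p1: "P1 TYPE('a) m" and p2: "P2 TYPE('a) m" and len: "length vs = Suc m"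
    and "k \<le> m" "(vs!k) m \<noteq> 0"
  shows "ceq (dd (Suc m) vs) (dpiv m vs k)"
proof -
  have ex: "\<exists>k\<le>m. (vs!k) m \<noteq> 0" using assms by blast
  show ?thesis
    unfolding dd_Suc_least(1)[OF ex]
    by (rule piv_indep[OF p1 p2 len dd_Suc_least(2)[OF ex] assms(4) dd_Suc_least2[OF ex] assms(5)])
qed


lemma P1_Suc:
  assumes p1: "P1 TYPE('a::division_ring) m" and p2: "P2 TYPE('a) m"
  shows "P1 TYPE('a) (Suc m)"
  unfolding P1_def
proof (intro allI impI)
  fix vs :: "(nat \<Rightarrow> 'a) list" and i j and s :: 'a
  assume len: "length vs = Suc m" and ij: "i < Suc m" "j < Suc m" "i \<noteq> j"
  define vs' where "vs' = vs[j := cadd (vs!j) (vs!i) s]"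
  have len': "length vs' = Suc m" by (simp add: vs'_def len)
  have nth': "\<And>x. x \<le> m \<Longrightarrow> vs'!x = (if x = j then cadd (vs!j) (vs!i) s else vs!x)"
    using len by (simp add: vs'_def nth_list_update)
  show "ceq (dd (Suc m) vs') (dd (Suc m) vs)"
  proof (cases "\<exists>k\<le>m. k \<noteq> j \<and> (vs!k) m \<noteq> 0")
    case True
    then obtain k where k: "k \<le> m" "k \<noteq> j" "(vs!k) m \<noteq> 0" by blast
    have vk: "vs'!k = vs!k" using nth' k by simp
    have c1: "ceq (dd (Suc m) vs') (dpiv m vs' k)"
      by (rule dd_any_piv[OF p1 p2 len' k(1)]) (use vk k in simp)
    have c2: "ceq (dd (Suc m) vs) (dpiv m vs k)"
      by (rule dd_any_piv[OF p1 p2 len k(1) k(3)])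
    have rvx: "\<And>x. x \<le> m \<Longrightarrow> rv m vs' k x = (if x = j then cadd (rv m vs k j) (rv m vs k i) s else rv m vs k x)"
      using nth' vk k ij by (auto simp: rv_def cadd_def fun_eq_iff algebra_simps)
    have c3: "ceq (dpiv m vs' k) (dpiv m vs k)"
    proof (cases "i = k")
      case True
      have "redl m vs' k = redl m vs k"
        by (rule nth_equalityI) (use rvx rv_self[OF k(3)] True k in \<open>auto simp: nth_redl cadd_def\<close>)
      then show ?thesis by (simp add: dpiv_def vk)
    next
      case False
      define \<sigma> where "\<sigma> = (\<lambda>x. if x = m then k else x)"
      have sj: "\<sigma> j < m" "\<sigma> i < m" "\<sigma> i \<noteq> \<sigma> j" using ij k False by (auto simp: \<sigma>_def)
      have eq: "redl m vs' k = (redl m vs k)[\<sigma> j := cadd ((redl m vs k)!\<sigma> j) ((redl m vs k)!\<sigma> i) s]"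
      proof (rule nth_equalityI)
        fix y assume "y < length (redl m vs' k)"
        then have ym: "y < m" by simp
        show "redl m vs' k ! y = (redl m vs k)[\<sigma> j := cadd ((redl m vs k)!\<sigma> j) ((redl m vs k)!\<sigma> i) s] ! y"
          using ym sj k ij False
          by (auto simp: nth_redl rvx \<sigma>_def nth_list_update)
      qed simp
      have "ceq (dd m (redl m vs' k)) (dd m (redl m vs k))"
        unfolding eq by (rule P1D[OF p1]) (use sj in simp_all)
      then show ?thesis unfolding dpiv_def vk by (meson ceq_mult_left ceq_mult_right)
    qed
    show ?thesis using c1 c2 c3 by (meson ceq_sym ceq_trans)
  next
    case False
    note F = False
    show ?thesis
    proof (cases "(vs!j) m = 0")
      case True
      then have "\<not> (\<exists>k\<le>m. (vs!k) m \<noteq> 0)" using F by auto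
      moreover then have "\<not> (\<exists>k\<le>m. (vs'!k) m \<noteq> 0)" using nth' ij by (auto simp: cadd_def)
      ultimately show ?thesis by (simp add: dd_Suc_nopiv)
    next
      case False
      have jm: "j \<le> m" using ij by simp
      have z: "\<And>x. x \<le> m \<Longrightarrow> x \<noteq> j \<Longrightarrow> (vs!x) m = 0" using F by auto
      have vj: "(vs'!j) m = (vs!j) m" using nth' jm z[of i] ij by (simp add: cadd_def)
      have c1: "ceq (dd (Suc m) vs') (dpiv m vs' j)"
        by (rule dd_any_piv[OF p1 p2 len' jm]) (use vj False in simp)
      have c2: "ceq (dd (Suc m) vs) (dpiv m vs j)"
        by (rule dd_any_piv[OF p1 p2 len jm False])
      have rx: "\<And>x. x \<le> m \<Longrightarrow> x \<noteq> j \<Longrightarrow> rv m vs' j x = rv m vs j x"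
        using nth' z vj by (simp add: rv_def cadd_def fun_eq_iff)
      have "redl m vs' j = redl m vs j"
        by (rule nth_equalityI) (use rx jm in \<open>auto simp: nth_redl\<close>)
      then have "dpiv m vs' j = dpiv m vs j" by (simp add: dpiv_def vj)
      then show ?thesis using c1 c2 by (metis ceq_sym ceq_trans)
    qed
  qed
qed

lemma P2_Suc:
  assumes p1: "P1 TYPE('a::division_ring) m" and p2: "P2 TYPE('a) m"
  shows "P2 TYPE('a) (Suc m)"
  unfolding P2_def
proof (intro allI impI)
  fix vs :: "(nat \<Rightarrow> 'a) list" and j and s :: 'a
  assume len: "length vs = Suc m" and ij: "j < Suc m" and s0: "s \<noteq> 0"
  define vs' where "vs' = vs[j := cscale (vs!j) s]"
  have len': "length vs' = Suc m" by (simp add: vs'_def len)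
  have nth': "\<And>x. x \<le> m \<Longrightarrow> vs'!x = (if x = j then cscale (vs!j) s else vs!x)"
    using len by (simp add: vs'_def nth_list_update)
  show "ceq (dd (Suc m) vs') (dd (Suc m) vs * s)"
  proof (cases "\<exists>k\<le>m. k \<noteq> j \<and> (vs!k) m \<noteq> 0")
    case True
    then obtain k where k: "k \<le> m" "k \<noteq> j" "(vs!k) m \<noteq> 0" by blast
    have vk: "vs'!k = vs!k" using nth' k by simp
    have c1: "ceq (dd (Suc m) vs') (dpiv m vs' k)"
      by (rule dd_any_piv[OF p1 p2 len' k(1)]) (use vk k in simp)
    have c2: "ceq (dd (Suc m) vs) (dpiv m vs k)"
      by (rule dd_any_piv[OF p1 p2 len k(1) k(3)])
    have rvx: "\<And>x. x \<le> m \<Longrightarrow> rv m vs' k x = (if x = j then cscale (rv m vs k j) s else rv m vs k x)"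
      using nth' vk k ij by (auto simp: rv_def cadd_def cscale_def fun_eq_iff algebra_simps)
    define \<sigma> where "\<sigma> = (\<lambda>x. if x = m then k else x)"
    have sj: "\<sigma> j < m" using ij k by (auto simp: \<sigma>_def)
    have eq: "redl m vs' k = (redl m vs k)[\<sigma> j := cscale ((redl m vs k)!\<sigma> j) s]"
    proof (rule nth_equalityI)
      fix y assume "y < length (redl m vs' k)"
      then have ym: "y < m" by simp
      show "redl m vs' k ! y = (redl m vs k)[\<sigma> j := cscale ((redl m vs k)!\<sigma> j) s] ! y"
        using ym sj k ij by (auto simp: nth_redl rvx \<sigma>_def nth_list_update)
    qed simp
    have "ceq (dd m (redl m vs' k)) (dd m (redl m vs k) * s)"
      unfolding eq by (rule P2D[OF p2]) (use sj s0 in simp_all)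
    then have "ceq (dpiv m vs' k) ((if k = m then 1 else -1) * (dd m (redl m vs k) * s) * (vs!k) m)"
      unfolding dpiv_def vk by (meson ceq_mult_left ceq_mult_right)
    moreover have "ceq ((if k = m then 1 else -1) * (dd m (redl m vs k) * s) * (vs!k) m) (dpiv m vs k * s)"
    proof -
      have "ceq (s * (vs!k) m) ((vs!k) m * s)" by (rule ceq_comm)
      then have "ceq ((if k = m then 1 else -1) * dd m (redl m vs k) * (s * (vs!k) m))
                     ((if k = m then 1 else -1) * dd m (redl m vs k) * ((vs!k) m * s))"
        by (rule ceq_mult_left)
      then show ?thesis by (simp add: dpiv_def mult.assoc)
    qed
    ultimately have c3: "ceq (dpiv m vs' k) (dpiv m vs k * s)" by (rule ceq_trans)
    show ?thesis using c1 c2 c3 by (meson ceq_sym ceq_trans ceq_mult_right)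
  next
    case False
    note F = False
    show ?thesis
    proof (cases "(vs!j) m = 0")
      case True
      then have "\<not> (\<exists>k\<le>m. (vs!k) m \<noteq> 0)" using F by auto
      moreover then have "\<not> (\<exists>k\<le>m. (vs'!k) m \<noteq> 0)" using nth' ij by (auto simp: cscale_def)
      ultimately show ?thesis by (simp add: dd_Suc_nopiv)
    next
      case False
      have jm: "j \<le> m" using ij by simp
      have z: "\<And>x. x \<le> m \<Longrightarrow> x \<noteq> j \<Longrightarrow> (vs!x) m = 0" using F by auto
      have vj: "(vs'!j) m = (vs!j) m * s" using nth' jm by (simp add: cscale_def)
      have c1: "ceq (dd (Suc m) vs') (dpiv m vs' j)"
        by (rule dd_any_piv[OF p1 p2 len' jm]) (use vj False s0 in simp)
      have c2: "ceq (dd (Suc m) vs) (dpiv m vs j)"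
        by (rule dd_any_piv[OF p1 p2 len jm False])
      have rx: "\<And>x. x \<le> m \<Longrightarrow> x \<noteq> j \<Longrightarrow> rv m vs' j x = rv m vs j x"
        using nth' z vj by (simp add: rv_def cadd_def fun_eq_iff)
      have "redl m vs' j = redl m vs j"
        by (rule nth_equalityI) (use rx jm in \<open>auto simp: nth_redl\<close>)
      then have "dpiv m vs' j = dpiv m vs j * s" by (simp add: dpiv_def vj mult.assoc)
      then show ?thesis using c1 c2 by (metis ceq_sym ceq_trans ceq_mult_right)
    qed
  qed
qed

lemma P12_all: "P1 TYPE('a::division_ring) m \<and> P2 TYPE('a) m"
proof (induction m)
  case 0 then show ?case by (simp add: P1_def P2_def)
next
  case (Suc m) then show ?case using P1_Suc P2_Suc by blast
qed

lemma dd_colop: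
  fixes vs :: "(nat \<Rightarrow> 'a::division_ring) list"
  shows "length vs = m \<Longrightarrow> i < m \<Longrightarrow> j < m \<Longrightarrow> i \<noteq> j \<Longrightarrow> ceq (dd m (vs[j := cadd (vs!j) (vs!i) s])) (dd m vs)"
  using P12_all P1D by blast

lemma dd_any_piv':
  fixes vs :: "(nat \<Rightarrow> 'a::division_ring) list"
  shows "length vs = Suc m \<Longrightarrow> k \<le> m \<Longrightarrow> (vs!k) m \<noteq> 0 \<Longrightarrow> ceq (dd (Suc m) vs) (dpiv m vs k)"
  using P12_all dd_any_piv by blast

lemma dd_lower:
  fixes vs :: "(nat \<Rightarrow> 'a::division_ring) list"
  shows "length vs = m \<Longrightarrow> (\<forall>x<m. \<forall>t<x. (vs!x) t = 0) \<Longrightarrow> (\<forall>x<m. (vs!x) x \<noteq> 0) \<Longrightarrow>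
     ceq (dd m vs) (prod_list (map (\<lambda>x. (vs!x) x) [0..<m]))"
proof (induction m arbitrary: vs)
  case 0 then show ?case by simp
next
  case (Suc m)
  have c1: "ceq (dd (Suc m) vs) (dpiv m vs m)"
    by (rule dd_any_piv') (use Suc.prems in auto)
  have "dd m (redl m vs m) = dd m (butlast vs)"
    by (rule dd_cong) (use Suc.prems in \<open>auto simp: nth_redl rv_def cadd_def nth_butlast\<close>)
  moreover have "ceq (dd m (butlast vs)) (prod_list (map (\<lambda>x. (butlast vs!x) x) [0..<m]))"
    by (rule Suc.IH) (use Suc.prems in \<open>auto simp: nth_butlast\<close>)
  moreover have "map (\<lambda>x. (butlast vs!x) x) [0..<m] = map (\<lambda>x. (vs!x) x) [0..<m]"
    using Suc.prems by (auto simp: nth_butlast)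
  ultimately have "ceq (dpiv m vs m) (prod_list (map (\<lambda>x. (vs!x) x) [0..<m]) * (vs!m) m)"
    by (simp add: dpiv_def ceq_mult_right)
  then show ?case using c1 by (simp add: ceq_trans)
qed


definition cols :: "nat \<Rightarrow> (nat \<Rightarrow> nat \<Rightarrow> 'a) \<Rightarrow> (nat \<Rightarrow> 'a) list" where
  "cols n A = map (\<lambda>j t. A (Suc t) j) [1..<Suc n]"

definition DA :: "nat \<Rightarrow> (nat \<Rightarrow> nat \<Rightarrow> 'a::division_ring) \<Rightarrow> 'a" where
  "DA n A = dd n (cols n A)"

definition colop :: "(nat \<Rightarrow> nat \<Rightarrow> 'a::ring) \<Rightarrow> nat \<Rightarrow> nat \<Rightarrow> 'a \<Rightarrow> nat \<Rightarrow> nat \<Rightarrow> 'a" where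
  "colop A p q a = (\<lambda>i k. A i k + (if k = q then A i p * a else 0))"

lemma length_cols[simp]: "length (cols n A) = n" by (simp add: cols_def)
lemma nth_cols: "x < n \<Longrightarrow> cols n A ! x = (\<lambda>t. A (Suc t) (Suc x))"
  by (simp add: cols_def del: upt_Suc)

lemma DA_cong: "mat_eq n A B \<Longrightarrow> DA n A = DA n B"
  unfolding DA_def by (rule dd_cong) (auto simp: nth_cols mat_eq_def)

lemma DA_colop:
  assumes "p \<in> {1..n}" "q \<in> {1..n}" "p \<noteq> q"
  shows "ceq (DA n (colop A p q a)) (DA n A)"
proof -
  have "cols n (colop A p q a) = (cols n A)[q - 1 := cadd ((cols n A)!(q - 1)) ((cols n A)!(p - 1)) a]"
    by (rule nth_equalityI) (use assms in \<open>auto simp: nth_cols nth_list_update colop_def cadd_def fun_eq_iff\<close>)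
  then show ?thesis unfolding DA_def
    by (metis dd_colop length_cols assms atLeastAtMost_iff Suc_pred diff_less_mono less_Suc_eq_le less_one not_le
        diff_diff_cancel diff_is_0_eq' diff_le_self le_imp_less_Suc One_nat_def)
qed

lemma mat_eq_refl[simp]: "mat_eq n A A" by (simp add: mat_eq_def)
lemma mat_eq_sym: "mat_eq n A B \<Longrightarrow> mat_eq n B A" by (simp add: mat_eq_def)
lemma mat_eq_trans: "mat_eq n A B \<Longrightarrow> mat_eq n B C \<Longrightarrow> mat_eq n A C" by (simp add: mat_eq_def)

lemma mat_assoc: "mat_mult n (mat_mult n A B) C = mat_mult n A (mat_mult n (B::nat \<Rightarrow> nat \<Rightarrow> 'a::ring_1) C)"
proof (intro ext)
  fix i k
  have "mat_mult n (mat_mult n A B) C i k = (\<Sum>j\<in>{1..n}. \<Sum>l\<in>{1..n}. A i l * B l j * C j k)"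
    by (simp add: mat_mult_def sum_distrib_right)
  also have "\<dots> = (\<Sum>l\<in>{1..n}. \<Sum>j\<in>{1..n}. A i l * B l j * C j k)" by (rule sum.swap)
  also have "\<dots> = mat_mult n A (mat_mult n B C) i k"
    by (simp add: mat_mult_def sum_distrib_left mult.assoc)
  finally show "mat_mult n (mat_mult n A B) C i k = mat_mult n A (mat_mult n B C) i k" .
qed

lemma mat_eq_mult_left: "mat_eq n X Y \<Longrightarrow> mat_eq n (mat_mult n E X) (mat_mult n E (Y::nat \<Rightarrow> nat \<Rightarrow> 'a::ring_1))"
  by (simp add: mat_eq_def mat_mult_def)

lemma mat_eq_mult_right: "mat_eq n X Y \<Longrightarrow> mat_eq n (mat_mult n X E) (mat_mult n (Y::nat \<Rightarrow> nat \<Rightarrow> 'a::ring_1) E)"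
  by (simp add: mat_eq_def mat_mult_def)

lemma mat_mult_id_right: "mat_eq n (mat_mult n A mat_id) (A::nat \<Rightarrow> nat \<Rightarrow> 'a::ring_1)"
  by (simp add: mat_eq_def mat_mult_def mat_id_def if_distrib[of "\<lambda>x. _ * x"] cong: if_cong)

lemma mat_mult_id_left: "mat_eq n (mat_mult n mat_id A) (A::nat \<Rightarrow> nat \<Rightarrow> 'a::ring_1)"
  by (simp add: mat_eq_def mat_mult_def mat_id_def if_distrib[of "\<lambda>x. x * _"] cong: if_cong)

lemma mat_mult_elem:
  assumes "p \<in> {1..n}"
  shows "mat_eq n (mat_mult n A (elem_mat p q a)) (colop (A::nat \<Rightarrow> nat \<Rightarrow> 'a::ring_1) p q a)"
  unfolding mat_eq_def
proof (intro ballI)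
  fix i k assume "i \<in> {1..n}" "k \<in> {1..n}"
  have "mat_mult n A (elem_mat p q a) i k =
        (\<Sum>j\<in>{1..n}. (if j = k then A i j else 0)) + (\<Sum>j\<in>{1..n}. (if j = p then (if k = q then A i j * a else 0) else 0))"
    by (simp add: mat_mult_def elem_mat_def mat_id_def distrib_left sum.distrib if_distrib[of "\<lambda>x. _ * x"] cong: if_cong)
  also have "\<dots> = colop A p q a i k" using assms \<open>k \<in> {1..n}\<close> by (simp add: colop_def)
  finally show "mat_mult n A (elem_mat p q a) i k = colop A p q a i k" .
qed

definition dv :: "nat \<Rightarrow> 'a::ring_1 \<Rightarrow> nat \<Rightarrow> 'a" where
  "dv n x i = (if i = n then x else 1)"

lemma mult_diag_right: "k \<in> {1..n} \<Longrightarrow> mat_mult n X (diag_last n x) i k = X i k * dv n x k"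
  by (simp add: mat_mult_def diag_last_def dv_def if_distrib[of "\<lambda>y. _ * y"] cong: if_cong)

lemma mult_diag_left: "i \<in> {1..n} \<Longrightarrow> mat_mult n (diag_last n x) X i k = dv n x i * X i k"
  by (simp add: mat_mult_def diag_last_def dv_def if_distrib[of "\<lambda>y. y * _"] cong: if_cong)

lemma dv_nz: "(x::'a::division_ring) \<noteq> 0 \<Longrightarrow> dv n x i \<noteq> 0" by (simp add: dv_def)

lemma conj1:
  assumes "p \<noteq> q" "(x::'a::division_ring) \<noteq> 0"
  shows "mat_eq n (mat_mult n (elem_mat p q a) (diag_last n x))
                  (mat_mult n (diag_last n x) (elem_mat p q (inverse (dv n x p) * a * dv n x q)))"
  using assms dv_nz[OF assms(2), of n]
  by (auto simp: mat_eq_def mult_diag_right mult_diag_left elem_mat_def mat_id_def mult.assoc)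

lemma conj2:
  assumes "p \<noteq> q" "(x::'a::division_ring) \<noteq> 0"
  shows "mat_eq n (mat_mult n (diag_last n x) (elem_mat p q b))
                  (mat_mult n (elem_mat p q (dv n x p * b * inverse (dv n x q))) (diag_last n x))"
  using assms dv_nz[OF assms(2), of n]
  by (auto simp: mat_eq_def mult_diag_right mult_diag_left elem_mat_def mat_id_def mult.assoc)

lemma DA_elem_prods:
  "E \<in> elem_prods n \<Longrightarrow> ceq (DA n (mat_mult n A E)) (DA n (A::nat \<Rightarrow> nat \<Rightarrow> 'a::division_ring))"
proof (induction rule: elem_prods.induct)
  case id then show ?case using DA_cong[OF mat_mult_id_right, of n A] by simp
next
  case (step E p q a)
  have "DA n (mat_mult n A (mat_mult n E (elem_mat p q a))) = DA n (colop (mat_mult n A E) p q a)"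
    unfolding mat_assoc[symmetric] by (rule DA_cong[OF mat_mult_elem]) (use step in simp)
  then show ?case using DA_colop[of p n q "mat_mult n A E" a] step ceq_trans by metis
qed

lemma prod_list_ones: "(\<And>y. y < m \<Longrightarrow> f y = 1) \<Longrightarrow> prod_list (map f [0..<m]) = (1::'a::monoid_mult)"
  by (induction m) auto

lemma DA_diag:
  assumes "n \<ge> 1" "(x::'a::division_ring) \<noteq> 0"
  shows "ceq (DA n (diag_last n x)) x"
proof -
  have "ceq (DA n (diag_last n x)) (prod_list (map (\<lambda>y. (cols n (diag_last n x) ! y) y) [0..<n]))"
    unfolding DA_def by (rule dd_lower) (use assms in \<open>auto simp: nth_cols diag_last_def\<close>)
  moreover have "prod_list (map (\<lambda>y. (cols n (diag_last n x) ! y) y) [0..<n]) = x"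
  proof -
    obtain m where n: "n = Suc m" using assms by (cases n) auto
    have "prod_list (map (\<lambda>y. (cols n (diag_last n x) ! y) y) [0..<m]) = 1"
      by (rule prod_list_ones) (simp add: n nth_cols diag_last_def)
    then show ?thesis by (simp add: n nth_cols diag_last_def)
  qed
  ultimately show ?thesis by simp
qed

lemma conj_prods:
  assumes "E \<in> elem_prods n" "(x::'a::division_ring) \<noteq> 0"
  shows "\<exists>E'\<in>elem_prods n. mat_eq n (mat_mult n E (diag_last n x)) (mat_mult n (diag_last n x) E')"
  using assms(1)
proof (induction rule: elem_prods.induct)
  case id
  show ?case
    by (rule bexI[OF _ elem_prods.id]) (meson mat_eq_sym mat_eq_trans mat_mult_id_left mat_mult_id_right)
next
  case (step E p q a)
  then obtain E' where E': "E' \<in> elem_prods n" "mat_eq n (mat_mult n E (diag_last n x)) (mat_mult n (diag_last n x) E')"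
    by blast
  define a' where "a' = inverse (dv n x p) * a * dv n x q"
  have "mat_eq n (mat_mult n (mat_mult n E (elem_mat p q a)) (diag_last n x))
                 (mat_mult n E (mat_mult n (diag_last n x) (elem_mat p q a')))"
    unfolding mat_assoc a'_def by (rule mat_eq_mult_left[OF conj1]) (use step assms in auto)
  also have "mat_mult n E (mat_mult n (diag_last n x) (elem_mat p q a')) =
             mat_mult n (mat_mult n E (diag_last n x)) (elem_mat p q a')" by (simp add: mat_assoc)
  finally have 1: "mat_eq n (mat_mult n (mat_mult n E (elem_mat p q a)) (diag_last n x))
                   (mat_mult n (mat_mult n E (diag_last n x)) (elem_mat p q a'))" .
  have 2: "mat_eq n (mat_mult n (mat_mult n E (diag_last n x)) (elem_mat p q a'))
                    (mat_mult n (diag_last n x) (mat_mult n E' (elem_mat p q a')))"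
    unfolding mat_assoc[symmetric] by (rule mat_eq_mult_right[OF E'(2)])
  show ?case
    using mat_eq_trans[OF 1 2] elem_prods.step[OF E'(1) step(2,3,4)] by blast
qed

lemma DA_factor:
  assumes "E \<in> elem_prods n" "(x::'a::division_ring) \<noteq> 0" "n \<ge> 1"
    and "mat_eq n A (mat_mult n E (diag_last n x))"
  shows "ceq (DA n A) x"
proof -
  obtain E' where E': "E' \<in> elem_prods n" "mat_eq n (mat_mult n E (diag_last n x)) (mat_mult n (diag_last n x) E')"
    using conj_prods[OF assms(1,2)] by blast
  have "DA n A = DA n (mat_mult n (diag_last n x) E')"
    using DA_cong mat_eq_trans[OF assms(4) E'(2)] by blast
  then show ?thesis using DA_elem_prods[OF E'(1)] DA_diag[OF assms(3,2)] ceq_trans by metis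
qed


declare mat_eq_trans[trans]

definition inS :: "nat \<Rightarrow> (nat \<Rightarrow> nat \<Rightarrow> 'a::division_ring) \<Rightarrow> bool" where
  "inS n A \<longleftrightarrow> (\<exists>E\<in>elem_prods n. \<exists>x. x \<noteq> 0 \<and> mat_eq n A (mat_mult n E (diag_last n x)))"

lemma inS_cong:
  assumes "mat_eq n A B" "inS n A" shows "inS n B"
proof -
  obtain E x where Ex: "E \<in> elem_prods n" "x \<noteq> 0" "mat_eq n A (mat_mult n E (diag_last n x))"
    using assms(2) inS_def by blast
  have "mat_eq n B (mat_mult n E (diag_last n x))" by (rule mat_eq_trans[OF mat_eq_sym[OF assms(1)] Ex(3)])
  then show ?thesis using Ex(1,2) inS_def by blast
qed

lemma inS_colop:
  assumes "inS n A" "p \<in> {1..n}" "q \<in> {1..n}" "p \<noteq> q"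
  shows "inS n (colop A p q a)"
proof -
  obtain E x where Ex: "E \<in> elem_prods n" "x \<noteq> 0" "mat_eq n A (mat_mult n E (diag_last n x))"
    using assms(1) inS_def by blast
  define a' where "a' = dv n x p * a * inverse (dv n x q)"
  have "mat_eq n (colop A p q a) (mat_mult n A (elem_mat p q a))"
    by (rule mat_eq_sym[OF mat_mult_elem[OF assms(2)]])
  also have "mat_eq n (mat_mult n A (elem_mat p q a)) (mat_mult n (mat_mult n E (diag_last n x)) (elem_mat p q a))"
    by (rule mat_eq_mult_right[OF Ex(3)])
  also have "mat_mult n (mat_mult n E (diag_last n x)) (elem_mat p q a) = mat_mult n E (mat_mult n (diag_last n x) (elem_mat p q a))"
    by (simp add: mat_assoc)
  also have "mat_eq n (mat_mult n E (mat_mult n (diag_last n x) (elem_mat p q a))) (mat_mult n E (mat_mult n (elem_mat p q a') (diag_last n x)))"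
    unfolding a'_def by (rule mat_eq_mult_left[OF conj2[OF assms(4) Ex(2)]])
  also have "mat_mult n E (mat_mult n (elem_mat p q a') (diag_last n x)) = mat_mult n (mat_mult n E (elem_mat p q a')) (diag_last n x)"
    by (simp add: mat_assoc)
  finally show ?thesis
    using elem_prods.step[OF Ex(1) assms(2,3,4)] Ex(2) unfolding inS_def by blast
qed
  
lemma colop_inv: "p \<noteq> q \<Longrightarrow> colop (colop A p q a) p q (-a) = A"
  by (auto simp: colop_def fun_eq_iff algebra_simps)

lemma inS_colop_iff:
  assumes "p \<in> {1..n}" "q \<in> {1..n}" "p \<noteq> q"
  shows "inS n (colop A p q a) \<longleftrightarrow> inS n A"
  using inS_colop[OF _ assms] colop_inv[OF assms(3)] by metis

lemma elem_inv: "p \<in> {1..n} \<Longrightarrow> p \<noteq> q \<Longrightarrow> mat_eq n (mat_mult n (elem_mat p q a) (elem_mat p q (-a))) (mat_id::nat \<Rightarrow> nat \<Rightarrow> 'a::ring_1)"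
  by (rule mat_eq_trans[OF mat_mult_elem]) (auto simp: mat_eq_def colop_def elem_mat_def mat_id_def)

lemma elem_inv2: "p \<in> {1..n} \<Longrightarrow> p \<noteq> q \<Longrightarrow> mat_eq n (mat_mult n (elem_mat p q (-a)) (elem_mat p q a)) (mat_id::nat \<Rightarrow> nat \<Rightarrow> 'a::ring_1)"
  using elem_inv[of p n q "-a"] by simp

lemma prods_inv:
  "E \<in> elem_prods n \<Longrightarrow> \<exists>F. mat_eq n (mat_mult n E F) mat_id \<and> mat_eq n (mat_mult n F E) (mat_id::nat \<Rightarrow> nat \<Rightarrow> 'a::ring_1)"
proof (induction rule: elem_prods.induct)
  case id show ?case by (rule exI[of _ mat_id]) (simp add: mat_mult_id_left)
next
  case (step E p q a)
  then obtain F where F: "mat_eq n (mat_mult n E F) mat_id" "mat_eq n (mat_mult n F E) mat_id" by blast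
  define e where "e = (elem_mat p q a :: nat \<Rightarrow> nat \<Rightarrow> 'a)"
  define e' where "e' = (elem_mat p q (-a) :: nat \<Rightarrow> nat \<Rightarrow> 'a)"
  have ee: "mat_eq n (mat_mult n e e') mat_id" "mat_eq n (mat_mult n e' e) mat_id"
    unfolding e_def e'_def by (rule elem_inv, use step in auto) (rule elem_inv2, use step in auto)
  have 1: "mat_eq n (mat_mult n (mat_mult n E e) (mat_mult n e' F)) mat_id"
  proof -
    have a: "mat_eq n (mat_mult n E (mat_mult n (mat_mult n e e') F)) (mat_mult n E (mat_mult n mat_id F))"
      by (rule mat_eq_mult_left[OF mat_eq_mult_right[OF ee(1)]])
    have b: "mat_eq n (mat_mult n E (mat_mult n mat_id F)) (mat_mult n E F)"
      by (rule mat_eq_mult_left[OF mat_mult_id_left])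
    have c: "mat_mult n (mat_mult n E e) (mat_mult n e' F) = mat_mult n E (mat_mult n (mat_mult n e e') F)"
      by (simp only: mat_assoc)
    show ?thesis unfolding c by (rule mat_eq_trans[OF mat_eq_trans[OF a b] F(1)])
  qed
  have 2: "mat_eq n (mat_mult n (mat_mult n e' F) (mat_mult n E e)) mat_id"
  proof -
    have a: "mat_eq n (mat_mult n e' (mat_mult n (mat_mult n F E) e)) (mat_mult n e' (mat_mult n mat_id e))"
      by (rule mat_eq_mult_left[OF mat_eq_mult_right[OF F(2)]])
    have b: "mat_eq n (mat_mult n e' (mat_mult n mat_id e)) (mat_mult n e' e)"
      by (rule mat_eq_mult_left[OF mat_mult_id_left])
    have c: "mat_mult n (mat_mult n e' F) (mat_mult n E e) = mat_mult n e' (mat_mult n (mat_mult n F E) e)"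
      by (simp only: mat_assoc)
    show ?thesis unfolding c by (rule mat_eq_trans[OF mat_eq_trans[OF a b] ee(2)])
  qed
  show ?case by (rule exI[of _ "mat_mult n e' F"]) (use 1 2 in \<open>simp add: e_def\<close>)
qed

lemma diag_inv: "(x::'a::division_ring) \<noteq> 0 \<Longrightarrow> mat_eq n (mat_mult n (diag_last n x) (diag_last n (inverse x))) mat_id"
  by (auto simp: mat_eq_def mult_diag_right diag_last_def dv_def mat_id_def)

lemma diag_inv2: "(x::'a::division_ring) \<noteq> 0 \<Longrightarrow> mat_eq n (mat_mult n (diag_last n (inverse x)) (diag_last n x)) mat_id"
  by (auto simp: mat_eq_def mult_diag_right diag_last_def dv_def mat_id_def)

lemma inS_invertible:
  assumes "inS n (A::nat \<Rightarrow> nat \<Rightarrow> 'a::division_ring)"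
  shows "mat_invertible n A"
proof -
  obtain E x where Ex: "E \<in> elem_prods n" "x \<noteq> 0" "mat_eq n A (mat_mult n E (diag_last n x))"
    using assms inS_def by blast
  obtain F where F: "mat_eq n (mat_mult n E F) mat_id" "mat_eq n (mat_mult n F E) mat_id"
    using prods_inv[OF Ex(1)] by blast
  define D where "D = diag_last n x"
  define D' where "D' = diag_last n (inverse x)"
  define B where "B = mat_mult n D' F"
  have 1: "mat_eq n (mat_mult n A B) mat_id"
  proof -
    have a: "mat_eq n (mat_mult n A B) (mat_mult n (mat_mult n E D) B)"
      using mat_eq_mult_right[OF Ex(3)] D_def by blast
    have c: "mat_mult n (mat_mult n E D) B = mat_mult n E (mat_mult n (mat_mult n D D') F)"
      by (simp only: B_def mat_assoc)
    have b: "mat_eq n (mat_mult n E (mat_mult n (mat_mult n D D') F)) (mat_mult n E (mat_mult n mat_id F))"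
      by (rule mat_eq_mult_left[OF mat_eq_mult_right]) (use diag_inv[OF Ex(2)] D_def D'_def in simp)
    have d: "mat_eq n (mat_mult n E (mat_mult n mat_id F)) (mat_mult n E F)"
      by (rule mat_eq_mult_left[OF mat_mult_id_left])
    show ?thesis using a unfolding c by (meson b d F(1) mat_eq_trans)
  qed
  have 2: "mat_eq n (mat_mult n B A) mat_id"
  proof -
    have a: "mat_eq n (mat_mult n B A) (mat_mult n B (mat_mult n E D))"
      using mat_eq_mult_left[OF Ex(3)] D_def by blast
    have c: "mat_mult n B (mat_mult n E D) = mat_mult n D' (mat_mult n (mat_mult n F E) D)"
      by (simp only: B_def mat_assoc)
    have b: "mat_eq n (mat_mult n D' (mat_mult n (mat_mult n F E) D)) (mat_mult n D' (mat_mult n mat_id D))"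
      by (rule mat_eq_mult_left[OF mat_eq_mult_right[OF F(2)]])
    have d: "mat_eq n (mat_mult n D' (mat_mult n mat_id D)) (mat_mult n D' D)"
      by (rule mat_eq_mult_left[OF mat_mult_id_left])
    have e: "mat_eq n (mat_mult n D' D) mat_id" using diag_inv2[OF Ex(2)] by (simp add: D_def D'_def)
    show ?thesis using a unfolding c by (meson b d e mat_eq_trans)
  qed
  show ?thesis unfolding mat_invertible_def using 1 2 by blast
qed


lemma inS_diag_last: "(x::'a::division_ring) \<noteq> 0 \<Longrightarrow> inS n (diag_last n x)"
  unfolding inS_def using mat_eq_sym[OF mat_mult_id_left[of n "diag_last n x"]] elem_prods.id by blast

definition hop :: "(nat \<Rightarrow> nat \<Rightarrow> 'a::division_ring) \<Rightarrow> nat \<Rightarrow> nat \<Rightarrow> 'a \<Rightarrow> nat \<Rightarrow> nat \<Rightarrow> 'a" where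
  "hop A p q u = (\<lambda>i k. if k = p then A i k * u else if k = q then A i k * inverse u else A i k)"

definition twocol :: "(nat \<Rightarrow> nat \<Rightarrow> 'a) \<Rightarrow> nat \<Rightarrow> nat \<Rightarrow> (nat \<Rightarrow> 'a) \<Rightarrow> (nat \<Rightarrow> 'a) \<Rightarrow> nat \<Rightarrow> nat \<Rightarrow> 'a" where
  "twocol A p q X Y = (\<lambda>i k. if k = p then X i else if k = q then Y i else A i k)"

lemma twocol_1: "p \<noteq> q \<Longrightarrow> colop (twocol A p q X Y) p q a = twocol A p q X (\<lambda>i. Y i + X i * a)"
  by (auto simp: colop_def twocol_def fun_eq_iff)

lemma twocol_2: "p \<noteq> q \<Longrightarrow> colop (twocol A p q X Y) q p a = twocol A p q (\<lambda>i. X i + Y i * a) Y"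
  by (auto simp: colop_def twocol_def fun_eq_iff)

lemma twocol_0: "A = twocol A p q (\<lambda>i. A i p) (\<lambda>i. A i q)"
  by (auto simp: twocol_def fun_eq_iff)

lemma hop_eq:
  assumes "p \<noteq> q" "u \<noteq> 0"
  shows "hop A p q u = colop (colop (colop (colop (colop (colop A p q u) q p (- inverse u)) p q u) p q (-1)) q p 1) p q (-1)"
proof -
  have "colop (colop (colop (colop (colop (colop A p q u) q p (- inverse u)) p q u) p q (-1)) q p 1) p q (-1) =
    colop (colop (colop (colop (colop (colop (twocol A p q (\<lambda>i. A i p) (\<lambda>i. A i q)) p q u) q p (- inverse u)) p q u) p q (-1)) q p 1) p q (-1)"
    using twocol_0 by metis
  also have "\<dots> = twocol A p q (\<lambda>i. A i p * u) (\<lambda>i. A i q * inverse u)"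
    apply (simp only: twocol_1[OF assms(1)] twocol_2[OF assms(1)])
    by (rule arg_cong2[where f = "twocol A p q"]) (use assms in \<open>auto simp: fun_eq_iff algebra_simps\<close>)
  finally show ?thesis using assms by (auto simp: hop_def twocol_def fun_eq_iff)
qed

lemma inS_hop:
  assumes "p \<in> {1..n}" "q \<in> {1..n}" "p \<noteq> q" "u \<noteq> 0"
  shows "inS n (hop A p q u) \<longleftrightarrow> inS n A"
  unfolding hop_eq[OF assms(3,4)] using assms by (simp add: inS_colop_iff)

lemma inS_diag:
  assumes "\<And>i. i \<in> {1..n} \<Longrightarrow> (d i::'a::division_ring) \<noteq> 0"
  shows "inS n (\<lambda>i k. if i = k then d i else 0)"
proof -
  define \<Delta> where "\<Delta> = (\<lambda>j y i k. if i = k then (if i < j then 1 else if i = j then y else d i) else (0::'a))"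
  have main: "\<And>t. t < n \<Longrightarrow> \<forall>y. y \<noteq> 0 \<longrightarrow> inS n (\<Delta> (n - t) y)"
  proof -
    fix t show "t < n \<Longrightarrow> \<forall>y. y \<noteq> 0 \<longrightarrow> inS n (\<Delta> (n - t) y)"
    proof (induction t)
      case 0
      show ?case
      proof (intro allI impI)
        fix y :: 'a assume "y \<noteq> 0"
        have "mat_eq n (diag_last n y) (\<Delta> n y)" by (auto simp: mat_eq_def diag_last_def \<Delta>_def)
        then show "inS n (\<Delta> (n - 0) y)" using inS_diag_last[OF \<open>y \<noteq> 0\<close>] inS_cong by auto
      qed
    next
      case (Suc t)
      show ?case
      proof (intro allI impI)
        fix y :: 'a assume y: "y \<noteq> 0"
        define j where "j = n - t"
        have j: "2 \<le> j" "j \<le> n" "n - Suc t = j - 1" using Suc.prems by (auto simp: j_def)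
        have dj: "d j \<noteq> 0" using assms j by auto
        have "hop (\<Delta> (j - 1) y) (j - 1) j (inverse y) = \<Delta> j (d j * y)"
          using j y by (auto simp: hop_def \<Delta>_def fun_eq_iff)
        moreover have "inS n (\<Delta> j (d j * y))" using Suc.IH Suc.prems dj y j_def by simp
        ultimately have "inS n (hop (\<Delta> (j - 1) y) (j - 1) j (inverse y))" by simp
        moreover have "j - 1 \<in> {1..n}" "j \<in> {1..n}" "j - 1 \<noteq> j" "inverse y \<noteq> 0" using j y by auto
        ultimately have "inS n (\<Delta> (j - 1) y)" using inS_hop[where p = "j - 1" and n = n and q = j and u = "inverse y" and A = "\<Delta> (j - 1) y"] j y by simp
        then show "inS n (\<Delta> (n - Suc t) y)" using j by simp
      qed
    qed
  qed
  show ?thesis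
  proof (cases "n = 0")
    case True
    then show ?thesis using inS_diag_last[of 1 n] by (simp add: inS_def mat_eq_def)
  next
    case False
    then have "inS n (\<Delta> 1 (d 1))" using main[of "n - 1"] assms by simp
    moreover have "mat_eq n (\<Delta> 1 (d 1)) (\<lambda>i k. if i = k then d i else 0)"
      by (auto simp: mat_eq_def \<Delta>_def)
    ultimately show ?thesis using inS_cong by blast
  qed
qed


definition LTm :: "nat \<Rightarrow> (nat \<Rightarrow> nat \<Rightarrow> 'a::division_ring) \<Rightarrow> bool" where
  "LTm n A \<longleftrightarrow> (\<forall>i\<in>{1..n}. \<forall>k\<in>{1..n}. i < k \<longrightarrow> A i k = 0) \<and> (\<forall>i\<in>{1..n}. A i i \<noteq> 0)"

lemma inS_multi:
  assumes "r \<in> {1..n}" "m < r"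
  shows "l \<le> m \<Longrightarrow> inS n (\<lambda>i k. if 1 \<le> k \<and> k \<le> l then A i k + A i r * f k else A i k) \<longleftrightarrow> inS n A"
proof (induction l)
  case 0
  have "(\<lambda>i k. if 1 \<le> k \<and> k \<le> (0::nat) then A i k + A i r * f k else A i k) = A" by (auto simp: fun_eq_iff)
  then show ?case by simp
next
  case (Suc l)
  define X where "X = (\<lambda>i k. if 1 \<le> k \<and> k \<le> l then A i k + A i r * f k else A i k)"
  have e: "(\<lambda>i k. if 1 \<le> k \<and> k \<le> Suc l then A i k + A i r * f k else A i k) = colop X r (Suc l) (f (Suc l))"
    using Suc.prems assms by (auto simp: colop_def fun_eq_iff X_def)
  have sl: "Suc l \<in> {1..n}" and rl: "r \<noteq> Suc l" using Suc.prems assms by auto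
  have "inS n (\<lambda>i k. if 1 \<le> k \<and> k \<le> Suc l then A i k + A i r * f k else A i k) = inS n (colop X r (Suc l) (f (Suc l)))"
    by (simp only: e)
  also have "\<dots> = inS n X" by (rule inS_colop_iff[OF assms(1) sl rl])
  also have "\<dots> = inS n A" using Suc.IH Suc.prems by (simp add: X_def)
  finally show ?case .
qed

lemma inS_lower: "LTm n A \<Longrightarrow> inS n A"
proof -
  have "\<And>A. LTm n A \<Longrightarrow> (\<forall>i\<in>{1..n}. \<forall>k\<in>{1..n}. m < i \<and> k \<noteq> i \<longrightarrow> A i k = 0) \<Longrightarrow> inS n A" for m
  proof (induction m)
    case 0
    have "inS n (\<lambda>i k. if i = k then A i i else 0)" by (rule inS_diag) (use 0 in \<open>auto simp: LTm_def\<close>)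
    moreover have "mat_eq n (\<lambda>i k. if i = k then A i i else 0) A" using 0 by (auto simp: mat_eq_def)
    ultimately show ?case using inS_cong by blast
  next
    case (Suc m A)
    show ?case
    proof (cases "Suc m \<le> n")
      case False
      then show ?thesis using Suc by auto
    next
      case True
      define r where "r = Suc m"
      define d where "d = A r r"
      have r: "r \<in> {1..n}" "m < r" using True r_def by auto
      have d: "d \<noteq> 0" using Suc.prems r by (auto simp: LTm_def d_def)
      define f where "f = (\<lambda>k. - (inverse d * A r k))"
      define A' where "A' = (\<lambda>i k. if 1 \<le> k \<and> k \<le> m then A i k + A i r * f k else A i k)"
      have Air: "\<And>i. i \<in> {1..n} \<Longrightarrow> i \<noteq> r \<Longrightarrow> A i r = 0"
      proof -
        fix i assume i: "i \<in> {1..n}" "i \<noteq> r"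
        show "A i r = 0"
        proof (cases "i < r")
          case True then show ?thesis using Suc.prems(1) i r by (auto simp: LTm_def)
        next
          case False then show ?thesis using Suc.prems(2) i r r_def by auto
        qed
      qed
      have A'eq: "\<And>i k. i \<in> {1..n} \<Longrightarrow> k \<in> {1..n} \<Longrightarrow> A' i k = (if i = r \<and> k \<le> m then 0 else A i k)"
        using Air d by (auto simp: A'_def f_def d_def)
      have "LTm n A'" using Suc.prems(1) A'eq r by (auto simp: LTm_def)
      moreover have "\<forall>i\<in>{1..n}. \<forall>k\<in>{1..n}. m < i \<and> k \<noteq> i \<longrightarrow> A' i k = 0"
      proof (intro ballI impI)
        fix i k assume ik: "i \<in> {1..n}" "k \<in> {1..n}" "m < i \<and> k \<noteq> i"
        show "A' i k = 0"
        proof (cases "i = r")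
          case True
          then show ?thesis using A'eq ik Suc.prems(1) r_def by (auto simp: LTm_def)
        next
          case False
          then show ?thesis using A'eq ik Suc.prems(2) r_def by auto
        qed
      qed
      ultimately have "inS n A'" using Suc.IH by blast
      then show ?thesis using inS_multi[OF r(1) r(2), of m A f] by (simp add: A'_def)
    qed
  qed
  then show "LTm n A \<Longrightarrow> inS n A" using LTm_def[of n A] by (metis (no_types, lifting) atLeastAtMost_iff not_le)
qed


lemma cross_col:
  assumes "2 \<le> i" "i + 2 \<le> k"
  shows "crosses reversed i k (k - 1) 1"
  using assms by (cases reversed) (auto simp: crosses_def cyc4_def vord_def)

lemma cross_row:
  assumes "2 \<le> j" "j + 2 \<le> n"
  shows "crosses reversed n j 1 (n - 1)"
  using assms by (cases reversed) (auto simp: crosses_def cyc4_def vord_def)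

context
  fixes c :: "nat \<Rightarrow> nat \<Rightarrow> 'a::division_ring" and n :: nat and reversed :: bool
  assumes n3: "n \<ge> 3" and fr: "is_frieze n reversed c"
begin

lemma nz: "i \<in> {1..n} \<Longrightarrow> k \<in> {1..n} \<Longrightarrow> i \<noteq> k \<Longrightarrow> c i k \<noteq> 0"
  using fr by (simp add: is_frieze_def)

lemma tri: "i \<in> {1..n} \<Longrightarrow> j \<in> {1..n} \<Longrightarrow> k \<in> {1..n} \<Longrightarrow> distinct [i, j, k] \<Longrightarrow>
    c i j * inverse (c k j) * c k i = c i k * inverse (c j k) * c j i"
  using fr unfolding is_frieze_def by blast

lemma exch: "i \<in> {1..n} \<Longrightarrow> j \<in> {1..n} \<Longrightarrow> k \<in> {1..n} \<Longrightarrow> l \<in> {1..n} \<Longrightarrow> crosses reversed i k j l \<Longrightarrow>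
    c i k = c i j * inverse (c l j) * c l k + c i l * inverse (c j l) * c j k"
  using fr unfolding is_frieze_def by blast

definition M where "M = frieze_mat c"

lemma nzk: "3 \<le> k \<Longrightarrow> k \<le> n \<Longrightarrow> c 1 (k - 1) \<noteq> 0 \<and> c (k - 1) 1 \<noteq> 0 \<and> c k (k - 1) \<noteq> 0 \<and> c 1 k \<noteq> 0 \<and> k - 1 \<noteq> k \<and> k - 1 \<noteq> 1"
proof -
  assume k: "3 \<le> k" "k \<le> n"
  have r: "k - 1 \<in> {1..n}" "1 \<in> {1..n}" "k \<in> {1..n}" and d: "1 \<noteq> k - 1" "k \<noteq> k - 1" "1 \<noteq> k"
    using k by auto
  show ?thesis using nz[OF r(2) r(1) d(1)] nz[OF r(1) r(2) d(1)[symmetric]] nz[OF r(3) r(1) d(2)] nz[OF r(2) r(3) d(3)] d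
    by auto
qed

definition al where "al k = inverse (c 1 (k - 1)) * c 1 k"
definition be where "be k = inverse (c (k - 1) 1) * c (k - 1) k"

lemma col_zero:
  assumes "3 \<le> k" "k \<le> n" "1 \<le> i" "i < k"
  shows "M i k + M i (k - 1) * (- al k) + M i 1 * (- be k) = 0"
proof -
  consider "i = 1" | "i = k - 1" | "2 \<le> i" "i + 2 \<le> k" using assms by linarith
  then show ?thesis
  proof cases
    case 1
    then show ?thesis using assms nzk[of k] by (simp add: M_def frieze_mat_def al_def be_def mult.assoc[symmetric])
  next
    case 2
    then show ?thesis using assms nzk[of k] by (simp add: M_def frieze_mat_def al_def be_def mult.assoc[symmetric])
  next
    case 3
    have "c i k = c i (k - 1) * inverse (c 1 (k - 1)) * c 1 k + c i 1 * inverse (c (k - 1) 1) * c (k - 1) k"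
      by (rule exch) (use assms 3 cross_col in auto)
    moreover have "i \<noteq> k - 1" "i \<noteq> 1" "i \<noteq> k" using 3 by auto
    ultimately show ?thesis by (simp add: M_def frieze_mat_def al_def be_def mult.assoc)
  qed
qed

lemma col_diag:
  assumes "3 \<le> k" "k \<le> n"
  shows "M k k + M k (k - 1) * (- al k) + M k 1 * (- be k) = - (2 * (c k (k - 1) * inverse (c 1 (k - 1)) * c 1 k))"
proof -
  have "c k (k - 1) * inverse (c 1 (k - 1)) * c 1 k = c k 1 * inverse (c (k - 1) 1) * c (k - 1) k"
    by (rule tri) (use assms in auto)
  then show ?thesis using assms nzk[of k] by (simp add: M_def frieze_mat_def al_def be_def mult.assoc mult_2 algebra_simps)
qed

definition Lt where
  "Lt t = (\<lambda>i k. if t \<le> k \<and> 3 \<le> k \<and> k \<le> n then M i k + M i (k - 1) * (- al k) + M i 1 * (- be k) else M i k)"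

definition rel :: "(nat \<Rightarrow> nat \<Rightarrow> 'a) \<Rightarrow> (nat \<Rightarrow> nat \<Rightarrow> 'a) \<Rightarrow> bool" where
  "rel A B \<longleftrightarrow> (inS n A \<longleftrightarrow> inS n B) \<and> ceq (DA n A) (DA n B)"

lemma rel_trans: "rel A B \<Longrightarrow> rel B C \<Longrightarrow> rel A C"
  unfolding rel_def using ceq_trans by blast

lemma rel_colop: "p \<in> {1..n} \<Longrightarrow> q \<in> {1..n} \<Longrightarrow> p \<noteq> q \<Longrightarrow> rel (colop A p q a) A"
  unfolding rel_def using inS_colop_iff DA_colop by blast

lemma Lt_step:
  assumes "3 \<le> t" "t \<le> n"
  shows "Lt t = colop (colop (Lt (Suc t)) (t - 1) t (- al t)) 1 t (- be t)"
  using assms by (auto simp: Lt_def colop_def fun_eq_iff)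

lemma Lt_rel: "s \<le> n - 2 \<Longrightarrow> rel (Lt (n + 1 - s)) M"
proof (induction s)
  case 0
  have "Lt (n + 1) = M" by (auto simp: Lt_def fun_eq_iff)
  then show ?case by (simp add: rel_def)
next
  case (Suc s)
  define t where "t = n - s"
  have t: "3 \<le> t" "t \<le> n" "n + 1 - Suc s = t" "n + 1 - s = Suc t" using Suc.prems n3 by (auto simp: t_def)
  have "rel (Lt t) (colop (Lt (Suc t)) (t - 1) t (- al t))"
    unfolding Lt_step[OF t(1,2)] by (rule rel_colop) (use t in auto)
  moreover have "rel (colop (Lt (Suc t)) (t - 1) t (- al t)) (Lt (Suc t))"
    by (rule rel_colop) (use t in auto)
  moreover have "rel (Lt (Suc t)) M" using Suc t by simp
  ultimately show ?case using t rel_trans by metis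
qed

definition Lf where "Lf = colop (colop (Lt 3) 2 1 1) 1 2 (-1)"

lemma Lf_rel: "rel Lf M"
proof -
  have "rel Lf (colop (Lt 3) 2 1 1)" unfolding Lf_def by (rule rel_colop) (use n3 in auto)
  moreover have "rel (colop (Lt 3) 2 1 1) (Lt 3)" by (rule rel_colop) (use n3 in auto)
  moreover have "rel (Lt 3) M" using Lt_rel[of "n - 2"] n3 by (simp add: numeral_eq_Suc)
  ultimately show ?thesis using rel_trans by metis
qed

lemma Lf_eq: "Lf i k = (if k = 1 then M i 1 + M i 2 else if k = 2 then - M i 1 else Lt 3 i k)"
  by (auto simp: Lf_def colop_def Lt_def algebra_simps)

lemma Lf_upper: "i \<in> {1..n} \<Longrightarrow> k \<in> {1..n} \<Longrightarrow> i < k \<Longrightarrow> Lf i k = 0"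
  using col_zero[of k i] by (auto simp: Lf_eq Lt_def M_def frieze_mat_def)

definition gam where "gam k = - (2 * (c k (k - 1) * inverse (c 1 (k - 1)) * c 1 k))"

lemma Lf_diag: "Lf k k = (if k = 1 then c 1 2 else if k = 2 then - c 2 1 else if 3 \<le> k \<and> k \<le> n then gam k else 0)"
  using col_diag[of k] by (auto simp: Lf_eq Lt_def M_def frieze_mat_def gam_def)

lemma gam_nz: "(2::'a) \<noteq> 0 \<Longrightarrow> 3 \<le> k \<Longrightarrow> k \<le> n \<Longrightarrow> gam k \<noteq> 0"
  using nzk[of k] by (simp add: gam_def)

lemma Lf_LT: "(2::'a) \<noteq> 0 \<Longrightarrow> LTm n Lf"
  unfolding LTm_def using Lf_upper gam_nz nz[of 1 2] nz[of 2 1] n3 by (auto simp: Lf_diag)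


definition Tn where "Tn N = prod_list (map (\<lambda>i. c i (i + 1)) [1..<N]) * c N 1"

lemma solve_left:
  assumes "(a::'a) \<noteq> 0" "b \<noteq> 0" "a * inverse b * x = D"
  shows "x = b * inverse a * D"
proof -
  have "x = b * (inverse a * (a * (inverse b * x)))" using assms by simp
  then show ?thesis using assms(3) by (simp add: mult.assoc)
qed

lemma abel_step:
  assumes N: "2 \<le> N" "Suc N \<le> n"
  shows "ceq ((- ((- 2) ^ (N - 2)) * Tn N) * gam (Suc N)) (- ((- 2) ^ (Suc N - 2)) * Tn (Suc N))"
proof -
  define s :: 'a where "s = (- 2) ^ (N - 2)"
  define P where "P = prod_list (map (\<lambda>i. c i (i + 1)) [1..<N])"
  define a where "a = c 1 N"
  define b where "b = c (Suc N) N"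
  define cc where "cc = c (Suc N) 1"
  define d where "d = c 1 (Suc N)"
  define e where "e = c N (Suc N)"
  define f where "f = c N 1"
  have r: "1 \<in> {1..n}" "N \<in> {1..n}" "Suc N \<in> {1..n}" using N by auto
  have a0: "a \<noteq> 0" unfolding a_def by (rule nz) (use N in auto)
  have b0: "b \<noteq> 0" unfolding b_def by (rule nz) (use N in auto)
  have e0: "e \<noteq> 0" unfolding e_def by (rule nz) (use N in auto)
  have t: "a * inverse b * cc = d * inverse e * f"
    unfolding a_def b_def cc_def d_def e_def f_def by (rule tri) (use N in auto)
  have ccv: "cc = b * inverse a * (d * inverse e * f)" by (rule solve_left[OF a0 b0 t])
  have TN: "Tn N = P * f" by (simp add: Tn_def P_def f_def)
  have TN1: "Tn (Suc N) = P * e * cc" using N by (simp add: Tn_def P_def e_def cc_def)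
  have g: "gam (Suc N) = - (2 * (b * inverse a * d))" by (simp add: gam_def b_def a_def d_def)
  have pw: "(- 2) ^ (Suc N - 2) = s * (- 2 :: 'a)"
  proof -
    have ee: "Suc N - 2 = Suc (N - 2)" using N by simp
    show ?thesis unfolding ee s_def by (rule power_Suc2)
  qed
  have L: "(- s * Tn N) * gam (Suc N) = prod_list [-1, s, P, f, -1, 2, b, inverse a, d, e, inverse e]"
    using e0 by (simp add: TN g mult.assoc)
  have R: "- (s * (- 2)) * Tn (Suc N) = prod_list [-1, s, -1, 2, P, e, b, inverse a, d, inverse e, f]"
    by (simp add: TN1 ccv mult.assoc)
  have perm: "ceq (prod_list [-1, s, P, f, -1, 2, b, inverse a, d, e, inverse e])
            (prod_list [-1, s, -1, 2, P, e, b, inverse a, d, inverse e, f])"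
    by (rule ceq_prod_list_perm) (simp add: add_mset_commute)
  have final: "ceq ((- s * Tn N) * gam (Suc N)) (- (s * (- 2)) * Tn (Suc N))"
    unfolding L R by (rule perm)
  show ?thesis unfolding pw s_def[symmetric] by (rule final)
qed

lemma prod_claim:
  assumes "2 \<le> N"
  shows "N \<le> n \<Longrightarrow> ceq (prod_list (map (\<lambda>x. Lf (Suc x) (Suc x)) [0..<N])) (- ((- 2) ^ (N - 2)) * Tn N)"
  using assms
proof (induction N rule: nat_induct_at_least)
  case base
  have l1: "Lf 1 1 = c 1 2" using Lf_diag[of 1] by simp
  have l2: "Lf 2 2 = - c 2 1" using Lf_diag[of 2] by simp
  have m: "map (\<lambda>x. Lf (Suc x) (Suc x)) [0..<2] = [Lf 1 1, Lf 2 2]" by (simp add: numeral_2_eq_2)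
  have t: "Tn 2 = c 1 2 * c 2 1" by (simp add: Tn_def numeral_2_eq_2)
  show ?case unfolding m t l1 l2 by simp
next
  case (Suc N)
  have lfN: "Lf (Suc N) (Suc N) = gam (Suc N)" using Lf_diag[of "Suc N"] Suc.hyps Suc.prems by simp
  have A: "prod_list (map (\<lambda>x. Lf (Suc x) (Suc x)) [0..<Suc N]) =
        prod_list (map (\<lambda>x. Lf (Suc x) (Suc x)) [0..<N]) * gam (Suc N)"
    by (simp only: upt_Suc_append[OF le0] map_append prod_list.append list.map prod_list.Cons prod_list.Nil lfN mult_1_right)
  have B: "ceq (prod_list (map (\<lambda>x. Lf (Suc x) (Suc x)) [0..<N]) * gam (Suc N))
                     ((- ((- 2) ^ (N - 2)) * Tn N) * gam (Suc N))"
    by (rule ceq_mult_right) (use Suc.IH Suc.prems in simp)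
  show ?case unfolding A by (rule ceq_trans[OF B abel_step[OF Suc.hyps Suc.prems]])
qed

lemma row_rel:
  assumes two: "(2::'a) = 0" and j: "j \<in> {1..n}"
  shows "M n j = (c n 1 * inverse (c (n - 1) 1)) * M (n - 1) j + (c n (n - 1) * inverse (c 1 (n - 1))) * M 1 j"
proof -
  have r: "1 \<in> {1..n}" "n - 1 \<in> {1..n}" "n \<in> {1..n}" and d: "1 \<noteq> n - 1" "n \<noteq> n - 1" "1 \<noteq> n"
    using n3 by auto
  have z: "c (n - 1) 1 \<noteq> 0" "c 1 (n - 1) \<noteq> 0" using nz[OF r(2) r(1)] nz[OF r(1) r(2)] d by auto
  consider "j = 1" | "j = n - 1" | "j = n" | "2 \<le> j" "j + 2 \<le> n" using j n3 by force
  then show ?thesis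
  proof cases
    case 1 then show ?thesis using d z by (simp add: M_def frieze_mat_def mult.assoc)
  next
    case 2 then show ?thesis using d z by (simp add: M_def frieze_mat_def mult.assoc)
  next
    case 3
    have "c n 1 * inverse (c (n - 1) 1) * c (n - 1) n = c n (n - 1) * inverse (c 1 (n - 1)) * c 1 n"
      by (rule tri) (use r d in auto)
    moreover have "\<And>y::'a. y + y = 0" using two by (metis mult_2 mult_zero_left)
    ultimately show ?thesis using 3 d by (simp add: M_def frieze_mat_def)
  next
    case 4
    have "c n j = c n 1 * inverse (c (n - 1) 1) * c (n - 1) j + c n (n - 1) * inverse (c 1 (n - 1)) * c 1 j"
      by (rule exch) (use 4 cross_row in auto)
    moreover have "j \<noteq> n" "j \<noteq> n - 1" "j \<noteq> 1" using 4 by auto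
    ultimately show ?thesis by (simp add: M_def frieze_mat_def mult.assoc)
  qed
qed

lemma not_inv:
  assumes two: "(2::'a) = 0"
  shows "\<not> mat_invertible n M"
proof
  assume "mat_invertible n M"
  then obtain B where B: "mat_eq n (mat_mult n M B) mat_id" unfolding mat_invertible_def by blast
  define al' where "al' = c n 1 * inverse (c (n - 1) 1)"
  define be' where "be' = c n (n - 1) * inverse (c 1 (n - 1))"
  have "mat_mult n M B n n = (\<Sum>j\<in>{1..n}. (al' * M (n - 1) j + be' * M 1 j) * B j n)"
    unfolding mat_mult_def by (rule sum.cong) (use row_rel[OF two] al'_def be'_def in auto)
  also have "\<dots> = al' * mat_mult n M B (n - 1) n + be' * mat_mult n M B 1 n"
    by (simp add: mat_mult_def distrib_right sum.distrib sum_distrib_left mult.assoc)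
  also have "\<dots> = 0"
  proof -
    have r: "n - 1 \<in> {1..n}" "n \<in> {1..n}" "1 \<in> {1..n}" "n - 1 \<noteq> n" "1 \<noteq> n" using n3 by auto
    have "mat_mult n M B (n - 1) n = 0" using B r unfolding mat_eq_def mat_id_def by simp
    moreover have "mat_mult n M B 1 n = 0" using B r unfolding mat_eq_def mat_id_def by simp
    ultimately show ?thesis by simp
  qed
  finally have "mat_mult n M B n n = 0" .
  moreover have "mat_mult n M B n n = 1"
  proof -
    have r: "n \<in> {1..n}" using n3 by auto
    show ?thesis using B r unfolding mat_eq_def mat_id_def by simp
  qed
  ultimately show False by simp
qed

lemma main_result:
  "dieudonne_det n (frieze_mat c) =
     cls_mult (cls (- ((- 2) ^ (n - 2)))) (cls (prod_list (map (\<lambda>i. c i (i + 1)) [1..<n]) * c n 1))"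
proof (cases "(2::'a) = 0")
  case True
  have z: "(- 2 :: 'a) ^ (n - 2) = 0" using True n3 by (simp add: power_0_left)
  have "cls_mult (cls (- ((- 2) ^ (n - 2)))) (cls (prod_list (map (\<lambda>i. c i (i + 1)) [1..<n]) * c n 1))
        = cls (- ((- 2) ^ (n - 2)) * (prod_list (map (\<lambda>i. c i (i + 1)) [1..<n]) * c n 1))"
    by (rule cls_mult_cls)
  also have "\<dots> = cls 0" by (simp only: z minus_zero mult_zero_left)
  also have "\<dots> = {0}" by (simp add: cls_def)
  finally have rhs: "cls_mult (cls (- ((- 2) ^ (n - 2)))) (cls (prod_list (map (\<lambda>i. c i (i + 1)) [1..<n]) * c n 1)) = {0}" .
  show ?thesis using not_inv[OF True] rhs by (simp add: dieudonne_det_def M_def)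
next
  case False
  have "inS n Lf" by (rule inS_lower[OF Lf_LT[OF False]])
  then have SM: "inS n M" using Lf_rel rel_def by blast
  then have inv: "mat_invertible n M" by (rule inS_invertible)
  define P where "P = (\<lambda>x. x \<noteq> 0 \<and> (\<exists>E\<in>elem_prods n. mat_eq n M (mat_mult n E (diag_last n x))))"
  have "\<exists>x. P x" using SM unfolding inS_def P_def by blast
  then have Px: "P (SOME x. P x)" by (rule someI_ex)
  define x0 where "x0 = (SOME x. P x)"
  obtain E where E: "E \<in> elem_prods n" "x0 \<noteq> 0" "mat_eq n M (mat_mult n E (diag_last n x0))"
    using Px unfolding P_def x0_def by blast
  have c1: "ceq (DA n M) x0" by (rule DA_factor[OF E(1,2) _ E(3)]) (use n3 in simp)
  have c2: "ceq (DA n Lf) (DA n M)" using Lf_rel rel_def by blast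
  have c3: "ceq (DA n Lf) (prod_list (map (\<lambda>x. (cols n Lf ! x) x) [0..<n]))"
    unfolding DA_def by (rule dd_lower) (use Lf_LT[OF False] Lf_upper in \<open>auto simp: nth_cols LTm_def\<close>)
  have mm: "map (\<lambda>x. (cols n Lf ! x) x) [0..<n] = map (\<lambda>x. Lf (Suc x) (Suc x)) [0..<n]"
    by (simp add: nth_cols)
  have pc: "ceq (prod_list (map (\<lambda>x. Lf (Suc x) (Suc x)) [0..<n])) (- ((- 2) ^ (n - 2)) * Tn n)"
    by (rule prod_claim) (use n3 in auto)
  have c4: "ceq (DA n Lf) (- ((- 2) ^ (n - 2)) * Tn n)"
    by (rule ceq_trans[OF c3[unfolded mm] pc])
  have "ceq x0 (- ((- 2) ^ (n - 2)) * Tn n)"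
    by (rule ceq_trans[OF ceq_sym[OF c1] ceq_trans[OF ceq_sym[OF c2] c4]])
  then have "cls x0 = cls (- ((- 2) ^ (n - 2)) * Tn n)" by (rule cls_ceq)
  then show ?thesis using inv
    by (simp add: dieudonne_det_def M_def[symmetric] P_def[symmetric] x0_def[symmetric] cls_mult_cls Tn_def)
qed

end


theorem theoremA:
  fixes c :: "nat \<Rightarrow> nat \<Rightarrow> 'a::division_ring" and n :: nat and reversed :: bool
  assumes "n \<ge> 3"
    and "is_frieze n reversed c"
  shows "dieudonne_det n (frieze_mat c) =
           cls_mult (cls (- ((- 2) ^ (n - 2))))
                    (cls (prod_list (map (\<lambda>i. c i (i + 1)) [1..<n]) * c n 1))"
  by (rule main_result[OF assms])

end
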